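(* Assume the setting described in the context, with $(\rho,\sim)$ weakly commutative. Fix a permutation $\pi$ of $F$ and $\hat f\in F\cup\{\varnothing\}$, and let $\mathcal{X}^{\hat f}$ be a valid set of walks each of which contains $\hat f$. Then there exist a set of walks $\mathcal{X}^{\hat f}_\pi$ and a swapping mapping $\Phi^{\hat f}:\mathcal{X}^{\hat f}\to\mathcal{X}^{\hat f}_\pi$ that is a bijection, such that: (a) for every $\tau\in\mathcal{X}^{\hat f}_\pi$ the word $W=\mathrm{REV}[W^{\hat f}_\tau]$ belongs to $\mathrm{Stab}_\pi$, and $R_W=\{\hat f\}$ if $\hat f\in F$; (b) for every word $W$ the set $\{\tau\in\mathcal{X}^{\hat f}_\pi:\mathrm{REV}[W^{\hat f}_\tau]=W\}$ is valid.
   Context: Setting: $\Omega$ is a finite set and $F$ a finite set of flaws, each a nonempty subset of $\Omega$; $F_\sigma=\{f:\sigma\in f\}$. For $\sigma\in\Omega$ and $f\in F_\sigma$ there is a probability distribution $\rho(\cdot\mid f,\sigma)$ with support $A(f,\sigma)$. We write $\sigma\xrightarrow{f}\sigma'$ when $f\in F_\sigma$ and $\sigma'\in A(f,\sigma)$. A walk is a sequence $\sigma_1\xrightarrow{w_1}\sigma_2\cdots\xrightarrow{w_t}\sigma_{t+1}$ of such steps, with word $w_1\ldots w_t$. $\sim$ is a symmetric relation on $F$ (loops allowed), with $\Gamma(f)=\{g:f\sim g\}$, $\Gamma^+(f)=\Gamma(f)\cup\{f\}$ and $\Gamma^+(S)=\bigcup_{f\in S}\Gamma^+(f)$. It is assumed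 that for every step $\sigma\xrightarrow{f}\sigma'$, $F_{\sigma'}\subseteq(F_\sigma\setminus\{f\})\cup\Gamma(f)$. $S\subseteq F$ is independent if $f\not\sim g$ for distinct $f,g\in S$, and $\mathrm{Ind}(F)$ denotes the family of independent sets. Write $f\cong g$ if $f\sim g$ or $f=g$. $(\rho,\sim)$ is weakly commutative if there is an injective map SWAP sending each walk $\sigma_1\xrightarrow{f}\sigma_2\xrightarrow{g}\sigma_3$ with $f\not\sim g$ to a walk $\sigma_1\xrightarrow{g}\sigma_2'\xrightarrow{f}\sigma_3$; fix one. A valid swap replaces a consecutive subwalk $\sigma_1\xrightarrow{f}\sigma_2\xrightarrow{g}\sigma_3$ with $f\not\cong g$ by its SWAP image. A swapping mapping is a map on a set of walks sending each walk to the result of some sequence of valid swaps. A deterministic strategy assigns to each walk whose last state $\sigma$ is flawed a flaw in $F_\sigma$; a walk follows it if each flaw $w_i$ is the one assigned to the prefix ending at $\sigma_i$. A walk $\tau$ is a proper prefix of $\tau'$ if $\tau'$ starts with $\tau$ and $\tau'\ne\tau$. A set of walks is valid if all its walks follow one common deterministic strategy and no walk in it is a proper prefix of another walk in it. Every walk is said to contain $\varnothing$. For a walk $\tau$ containing $f\in F$, $W^f_\tau$ is the longest prefix of the word of $\tau$ that ends with $f$; $W^\varnothing_\tau$ is the whole word of $\tau$. For a word $W=w_1\ldots w_t$, $\mathrm{REV}[W]=w_t\ldots w_1$. A sequence $(I_1,\ldots,I_s)$ with $s\ge1$ is stable if $I_r\in\mathrm{Ind}(F)$ and $I_{r+1}\subseteq\Gamma^+(I_r)$.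 A word $W$ is stable if $W=W_1\ldots W_s$ with nonempty words $W_r$ of distinct flaws whose flaw sets form a stable sequence (this partition is unique). It is $\pi$-stable if in addition each $W_r$ is strictly increasing in the total order induced by $\pi$. $R_W$ is the flaw set of $W_1$, with $R_W=\varnothing$ for the empty word. $\mathrm{Stab}_\pi$ is the set of $\pi$-stable words $W$ such that some walk has word $W$ or $\mathrm{REV}[W]$. *)

theory Defs
  imports Complex_Main
begin

text \<open>States have type 'a; the state space is Omega :: 'a set; a flaw is a subset of Omega,
  so flaws have type 'a set and F :: 'a set set.  A walk
  sigma_1 -w_1-> sigma_2 ... -w_t-> sigma_(t+1) is represented as the pair
  (sigma_1, [(w_1, sigma_2), ..., (w_t, sigma_(t+1))]).\<close>

type_synonym 'a walk = "'a \<times> ('a set \<times> 'a) list"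

definition flaws_at :: "'a set set \<Rightarrow> 'a \<Rightarrow> 'a set set" where
  "flaws_at F \<sigma> = {f \<in> F. \<sigma> \<in> f}"

definition supp :: "'a set \<Rightarrow> ('a set \<Rightarrow> 'a \<Rightarrow> 'a \<Rightarrow> real) \<Rightarrow> 'a set \<Rightarrow> 'a \<Rightarrow> 'a set" where
  "supp \<Omega> \<rho> f \<sigma> = {\<sigma>' \<in> \<Omega>. \<rho> f \<sigma> \<sigma>' > 0}"

definition Gamma :: "'a set set \<Rightarrow> ('a set \<Rightarrow> 'a set \<Rightarrow> bool) \<Rightarrow> 'a set \<Rightarrow> 'a set set" where
  "Gamma F sim f = {g \<in> F. sim f g}"

definition Gamma_plus :: "'a set set \<Rightarrow> ('a set \<Rightarrow> 'a set \<Rightarrow> bool) \<Rightarrow> 'a set set \<Rightarrow> 'a set set" where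
  "Gamma_plus F sim S = (\<Union>f\<in>S. Gamma F sim f \<union> {f})"

definition step :: "'a set \<Rightarrow> 'a set set \<Rightarrow> ('a set \<Rightarrow> 'a \<Rightarrow> 'a \<Rightarrow> real) \<Rightarrow> 'a \<Rightarrow> 'a set \<Rightarrow> 'a \<Rightarrow> bool" where
  "step \<Omega> F \<rho> \<sigma> f \<sigma>' \<longleftrightarrow> f \<in> flaws_at F \<sigma> \<and> \<sigma>' \<in> supp \<Omega> \<rho> f \<sigma>"

fun walk_from :: "'a set \<Rightarrow> 'a set set \<Rightarrow> ('a set \<Rightarrow> 'a \<Rightarrow> 'a \<Rightarrow> real) \<Rightarrow> 'a \<Rightarrow> ('a set \<times> 'a) list \<Rightarrow> bool" where
  "walk_from \<Omega> F \<rho> \<sigma> [] = True"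
| "walk_from \<Omega> F \<rho> \<sigma> ((f, \<sigma>') # rest) = (step \<Omega> F \<rho> \<sigma> f \<sigma>' \<and> walk_from \<Omega> F \<rho> \<sigma>' rest)"

definition is_walk :: "'a set \<Rightarrow> 'a set set \<Rightarrow> ('a set \<Rightarrow> 'a \<Rightarrow> 'a \<Rightarrow> real) \<Rightarrow> 'a walk \<Rightarrow> bool" where
  "is_walk \<Omega> F \<rho> \<tau> \<longleftrightarrow> fst \<tau> \<in> \<Omega> \<and> walk_from \<Omega> F \<rho> (fst \<tau>) (snd \<tau>)"

definition word :: "'a walk \<Rightarrow> 'a set list" where
  "word \<tau> = map fst (snd \<tau>)"

definition last_state :: "'a walk \<Rightarrow> 'a" where
  "last_state \<tau> = last (fst \<tau> # map snd (snd \<tau>))"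

definition setting :: "'a set \<Rightarrow> 'a set set \<Rightarrow> ('a set \<Rightarrow> 'a \<Rightarrow> 'a \<Rightarrow> real) \<Rightarrow> ('a set \<Rightarrow> 'a set \<Rightarrow> bool) \<Rightarrow> bool" where
  "setting \<Omega> F \<rho> sim \<longleftrightarrow>
     finite \<Omega> \<and> finite F \<and> (\<forall>f\<in>F. f \<noteq> {} \<and> f \<subseteq> \<Omega>) \<and>
     (\<forall>\<sigma>\<in>\<Omega>. \<forall>f\<in>flaws_at F \<sigma>.
        (\<forall>\<sigma>'. \<rho> f \<sigma> \<sigma>' \<ge> 0) \<and> (\<forall>\<sigma>'. \<sigma>' \<notin> \<Omega> \<longrightarrow> \<rho> f \<sigma> \<sigma>' = 0) \<and>
        (\<Sum>\<sigma>'\<in>\<Omega>. \<rho> f \<sigma> \<sigma>') = 1) \<and>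
     (\<forall>f g. sim f g \<longrightarrow> sim g f) \<and>
     (\<forall>\<sigma> f \<sigma>'. step \<Omega> F \<rho> \<sigma> f \<sigma>' \<longrightarrow>
        flaws_at F \<sigma>' \<subseteq> (flaws_at F \<sigma> - {f}) \<union> Gamma F sim f)"

text \<open>SWAP witnesses weak commutativity: it is injective on the two-step walks
  sigma1 -f-> sigma2 -g-> sigma3 with f not~ g and maps each to a walk
  sigma1 -g-> sigma2' -f-> sigma3.\<close>
definition swap_map :: "'a set \<Rightarrow> 'a set set \<Rightarrow> ('a set \<Rightarrow> 'a \<Rightarrow> 'a \<Rightarrow> real) \<Rightarrow> ('a set \<Rightarrow> 'a set \<Rightarrow> bool)
    \<Rightarrow> ('a walk \<Rightarrow> 'a walk) \<Rightarrow> bool" where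
  "swap_map \<Omega> F \<rho> sim SWAP \<longleftrightarrow>
     (\<forall>\<sigma>1 f \<sigma>2 g \<sigma>3. step \<Omega> F \<rho> \<sigma>1 f \<sigma>2 \<and> step \<Omega> F \<rho> \<sigma>2 g \<sigma>3 \<and> \<not> sim f g \<longrightarrow>
        (\<exists>\<sigma>2'. SWAP (\<sigma>1, [(f, \<sigma>2), (g, \<sigma>3)]) = (\<sigma>1, [(g, \<sigma>2'), (f, \<sigma>3)]) \<and>
               step \<Omega> F \<rho> \<sigma>1 g \<sigma>2' \<and> step \<Omega> F \<rho> \<sigma>2' f \<sigma>3)) \<and>
     inj_on SWAP {(\<sigma>1, [(f, \<sigma>2), (g, \<sigma>3)]) | \<sigma>1 f \<sigma>2 g \<sigma>3.
                    step \<Omega> F \<rho> \<sigma>1 f \<sigma>2 \<and> step \<Omega> F \<rho> \<sigma>2 g \<sigma>3 \<and> \<not> sim f g}"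

definition valid_swap :: "'a set \<Rightarrow> 'a set set \<Rightarrow> ('a set \<Rightarrow> 'a \<Rightarrow> 'a \<Rightarrow> real) \<Rightarrow> ('a set \<Rightarrow> 'a set \<Rightarrow> bool)
    \<Rightarrow> ('a walk \<Rightarrow> 'a walk) \<Rightarrow> 'a walk \<Rightarrow> 'a walk \<Rightarrow> bool" where
  "valid_swap \<Omega> F \<rho> sim SWAP \<tau> \<tau>' \<longleftrightarrow> is_walk \<Omega> F \<rho> \<tau> \<and>
     (\<exists>\<sigma> pre f \<sigma>2 g \<sigma>3 post.
        \<tau> = (\<sigma>, pre @ [(f, \<sigma>2), (g, \<sigma>3)] @ post) \<and> \<not> sim f g \<and> f \<noteq> g \<and>
        \<tau>' = (\<sigma>, pre @ snd (SWAP (last_state (\<sigma>, pre), [(f, \<sigma>2), (g, \<sigma>3)])) @ post))"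

definition swapping_mapping :: "'a set \<Rightarrow> 'a set set \<Rightarrow> ('a set \<Rightarrow> 'a \<Rightarrow> 'a \<Rightarrow> real) \<Rightarrow> ('a set \<Rightarrow> 'a set \<Rightarrow> bool)
    \<Rightarrow> ('a walk \<Rightarrow> 'a walk) \<Rightarrow> 'a walk set \<Rightarrow> ('a walk \<Rightarrow> 'a walk) \<Rightarrow> bool" where
  "swapping_mapping \<Omega> F \<rho> sim SWAP X \<Phi> \<longleftrightarrow>
     (\<forall>\<tau>\<in>X. (valid_swap \<Omega> F \<rho> sim SWAP)\<^sup>*\<^sup>* \<tau> (\<Phi> \<tau>))"

definition det_strategy :: "'a set \<Rightarrow> 'a set set \<Rightarrow> ('a set \<Rightarrow> 'a \<Rightarrow> 'a \<Rightarrow> real) \<Rightarrow> ('a walk \<Rightarrow> 'a set) \<Rightarrow> bool" where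
  "det_strategy \<Omega> F \<rho> str \<longleftrightarrow>
     (\<forall>\<tau>. is_walk \<Omega> F \<rho> \<tau> \<and> flaws_at F (last_state \<tau>) \<noteq> {} \<longrightarrow> str \<tau> \<in> flaws_at F (last_state \<tau>))"

definition follows :: "('a walk \<Rightarrow> 'a set) \<Rightarrow> 'a walk \<Rightarrow> bool" where
  "follows str \<tau> \<longleftrightarrow> (\<forall>i < length (snd \<tau>). fst (snd \<tau> ! i) = str (fst \<tau>, take i (snd \<tau>)))"

definition proper_prefix :: "'a walk \<Rightarrow> 'a walk \<Rightarrow> bool" where
  "proper_prefix \<tau> \<tau>' \<longleftrightarrow> fst \<tau> = fst \<tau>' \<and> (\<exists>xs. xs \<noteq> [] \<and> snd \<tau>' = snd \<tau> @ xs)"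

definition valid_set :: "'a set \<Rightarrow> 'a set set \<Rightarrow> ('a set \<Rightarrow> 'a \<Rightarrow> 'a \<Rightarrow> real) \<Rightarrow> 'a walk set \<Rightarrow> bool" where
  "valid_set \<Omega> F \<rho> X \<longleftrightarrow> (\<forall>\<tau>\<in>X. is_walk \<Omega> F \<rho> \<tau>) \<and>
     (\<exists>str. det_strategy \<Omega> F \<rho> str \<and> (\<forall>\<tau>\<in>X. follows str \<tau>)) \<and>
     (\<forall>\<tau>\<in>X. \<forall>\<tau>'\<in>X. \<not> proper_prefix \<tau> \<tau>')"

text \<open>None represents the empty flaw symbol.\<close>
definition contains :: "'a set option \<Rightarrow> 'a walk \<Rightarrow> bool" where
  "contains fh \<tau> = (case fh of None \<Rightarrow> True | Some f \<Rightarrow> f \<in> set (word \<tau>))"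

definition W_upto :: "'a set option \<Rightarrow> 'a walk \<Rightarrow> 'a set list" where
  "W_upto fh \<tau> = (case fh of None \<Rightarrow> word \<tau>
     | Some f \<Rightarrow> take (Suc (GREATEST i. i < length (word \<tau>) \<and> word \<tau> ! i = f)) (word \<tau>))"

definition independent :: "'a set set \<Rightarrow> ('a set \<Rightarrow> 'a set \<Rightarrow> bool) \<Rightarrow> 'a set set \<Rightarrow> bool" where
  "independent F sim S \<longleftrightarrow> S \<subseteq> F \<and> (\<forall>f\<in>S. \<forall>g\<in>S. f \<noteq> g \<longrightarrow> \<not> sim f g)"

definition stable_seq :: "'a set set \<Rightarrow> ('a set \<Rightarrow> 'a set \<Rightarrow> bool) \<Rightarrow> 'a set set list \<Rightarrow> bool" where
  "stable_seq F sim Is \<longleftrightarrow> Is \<noteq> [] \<and> (\<forall>I\<in>set Is. independent F sim I) \<and>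
     (\<forall>r. Suc r < length Is \<longrightarrow> Is ! Suc r \<subseteq> Gamma_plus F sim (Is ! r))"

definition stable_partition :: "'a set set \<Rightarrow> ('a set \<Rightarrow> 'a set \<Rightarrow> bool) \<Rightarrow> 'a set list \<Rightarrow> 'a set list list \<Rightarrow> bool" where
  "stable_partition F sim W Ws \<longleftrightarrow> W = concat Ws \<and> (\<forall>b\<in>set Ws. b \<noteq> [] \<and> distinct b) \<and>
     stable_seq F sim (map set Ws)"

text \<open>pi-stable words; the empty word is counted as pi-stable (cf. R_W = {} for it).\<close>
definition pi_stable :: "'a set set \<Rightarrow> ('a set \<Rightarrow> 'a set \<Rightarrow> bool) \<Rightarrow> ('a set \<Rightarrow> nat) \<Rightarrow> 'a set list \<Rightarrow> bool" where
  "pi_stable F sim \<pi> W \<longleftrightarrow> W = [] \<or>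
     (\<exists>Ws. stable_partition F sim W Ws \<and> (\<forall>b\<in>set Ws. sorted_wrt (\<lambda>f g. \<pi> f < \<pi> g) b))"

definition R_W :: "'a set set \<Rightarrow> ('a set \<Rightarrow> 'a set \<Rightarrow> bool) \<Rightarrow> 'a set list \<Rightarrow> 'a set set" where
  "R_W F sim W = (if W = [] then {} else set (hd (THE Ws. stable_partition F sim W Ws)))"

definition Stab :: "'a set \<Rightarrow> 'a set set \<Rightarrow> ('a set \<Rightarrow> 'a \<Rightarrow> 'a \<Rightarrow> real) \<Rightarrow> ('a set \<Rightarrow> 'a set \<Rightarrow> bool)
    \<Rightarrow> ('a set \<Rightarrow> nat) \<Rightarrow> 'a set list set" where
  "Stab \<Omega> F \<rho> sim \<pi> = {W. pi_stable F sim \<pi> W \<and>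
     (\<exists>\<tau>. is_walk \<Omega> F \<rho> \<tau> \<and> (word \<tau> = W \<or> word \<tau> = rev W))}"

end

theory Submission
  imports Defs
begin

locale L =
  fixes \<Omega> :: "'a set" and F :: "'a set set" and \<rho> :: "'a set \<Rightarrow> 'a \<Rightarrow> 'a \<Rightarrow> real"
    and sim :: "'a set \<Rightarrow> 'a set \<Rightarrow> bool" and SWAP :: "'a walk \<Rightarrow> 'a walk"
    and \<pi> :: "'a set \<Rightarrow> nat" and fh :: "'a set option"
  assumes sett: "setting \<Omega> F \<rho> sim"
    and swm: "swap_map \<Omega> F \<rho> sim SWAP"
    and pinj: "inj_on \<pi> F"
    and fhF: "\<forall>f. fh = Some f \<longrightarrow> f \<in> F"
begin

lemma sym: "sim f g \<Longrightarrow> sim g f"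
  using sett unfolding setting_def by blast

definition dep :: "'a set \<Rightarrow> 'a set \<Rightarrow> bool" where
  "dep g h \<longleftrightarrow> sim g h \<or> g = h"

definition hasdep :: "'a set \<Rightarrow> 'a set list \<Rightarrow> bool" where
  "hasdep h xs \<longleftrightarrow> (\<exists>x\<in>set xs. dep x h)"

definition okb :: "'a set list \<Rightarrow> bool" where
  "okb B \<longleftrightarrow> B \<noteq> [] \<and> distinct B \<and> independent F sim (set B)"

fun sp :: "'a set list list \<Rightarrow> bool" where
  "sp [] = False"
| "sp [B] = okb B"
| "sp (B # C # Bs) = (okb B \<and> set C \<subseteq> Gamma_plus F sim (set B) \<and> sp (C # Bs))"

definition srt :: "'a set list list \<Rightarrow> bool" where
  "srt Ws \<longleftrightarrow> (\<forall>b\<in>set Ws. sorted_wrt (\<lambda>f g. \<pi> f < \<pi> g) b)"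

definition ins' :: "'a set \<Rightarrow> 'a set list \<Rightarrow> 'a set list" where
  "ins' h B = takeWhile (\<lambda>x. \<pi> x < \<pi> h) B @ h # dropWhile (\<lambda>x. \<pi> x < \<pi> h) B"

fun insb :: "'a set \<Rightarrow> 'a set list list \<Rightarrow> 'a set list list" where
  "insb h [] = [[h]]"
| "insb h (B # Bs) = (if hasdep h (concat Bs) then B # insb h Bs
     else if hasdep h B then (case Bs of [] \<Rightarrow> [B, [h]] | C # Cs \<Rightarrow> B # ins' h C # Cs)
     else ins' h B # Bs)"

fun posb :: "'a set \<Rightarrow> 'a set list list \<Rightarrow> nat" where
  "posb h [] = 0"
| "posb h (B # Bs) = (if hasdep h (concat Bs) then length B + posb h Bs
     else if hasdep h B then (case Bs of [] \<Rightarrow> length B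
        | C # Cs \<Rightarrow> length B + length (takeWhile (\<lambda>x. \<pi> x < \<pi> h) C))
     else length (takeWhile (\<lambda>x. \<pi> x < \<pi> h) B))"

lemma gp_iff: "h \<in> F \<Longrightarrow> h \<in> Gamma_plus F sim S \<longleftrightarrow> (\<exists>x\<in>S. dep x h)"
  unfolding Gamma_plus_def Gamma_def dep_def by auto

lemma gp_mono: "S \<subseteq> T \<Longrightarrow> Gamma_plus F sim S \<subseteq> Gamma_plus F sim T"
  unfolding Gamma_plus_def by auto

lemma sp_nonempty: "sp Ws \<Longrightarrow> Ws \<noteq> []" by (cases Ws) auto

lemma sp_hd: "sp (B # Bs) \<Longrightarrow> okb B" by (cases Bs) auto
lemma sp_tl: "sp (B # Bs) \<Longrightarrow> Bs \<noteq> [] \<Longrightarrow> sp Bs" by (cases Bs) auto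

lemma okb_F: "okb B \<Longrightarrow> set B \<subseteq> F" unfolding okb_def independent_def by auto

lemma sp_F: "sp Ws \<Longrightarrow> set (concat Ws) \<subseteq> F"
proof (induction Ws rule: sp.induct)
  case (3 B C Bs) then show ?case using okb_F by auto
qed (auto dest: okb_F)

lemma sorted_ins':
  assumes "sorted_wrt (\<lambda>f g. \<pi> f < \<pi> g) B" "\<forall>x\<in>set B. \<pi> x \<noteq> \<pi> h"
  shows "sorted_wrt (\<lambda>f g. \<pi> f < \<pi> g) (ins' h B)"
proof -
  let ?P = "\<lambda>x. \<pi> x < \<pi> h"
  have B: "B = takeWhile ?P B @ dropWhile ?P B" by simp
  have s1: "sorted_wrt (\<lambda>f g. \<pi> f < \<pi> g) (takeWhile ?P B)"
    and s2: "sorted_wrt (\<lambda>f g. \<pi> f < \<pi> g) (dropWhile ?P B)"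
    and s3: "\<forall>x\<in>set (takeWhile ?P B). \<forall>y\<in>set (dropWhile ?P B). \<pi> x < \<pi> y"
    using assms(1) B by (metis sorted_wrt_append)+
  have d: "\<forall>y\<in>set (dropWhile ?P B). \<pi> h < \<pi> y"
  proof (cases "dropWhile ?P B")
    case (Cons y0 ys)
    have "y0 \<in> set B" using Cons by (metis list.set_intros(1) set_dropWhileD)
    then have "\<pi> h < \<pi> y0" using Cons assms(2) dropWhile_eq_Cons_conv[of ?P B y0 ys] by force
    then show ?thesis using s2 Cons by auto
  next
    case Nil show ?thesis unfolding Nil by simp
  qed
  show ?thesis unfolding ins'_def using s1 s2 s3 d
    by (auto simp: sorted_wrt_append dest: set_takeWhileD)
qed

lemma set_ins': "set (ins' h B) = insert h (set B)"
proof -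
  have "set (takeWhile (\<lambda>x. \<pi> x < \<pi> h) B) \<union> set (dropWhile (\<lambda>x. \<pi> x < \<pi> h) B) = set B"
    by (metis set_append takeWhile_dropWhile_id)
  then show ?thesis unfolding ins'_def by auto
qed

lemma okb_ins':
  assumes "okb B" "h \<in> F" "\<not> hasdep h B"
  shows "okb (ins' h B)"
proof -
  let ?P = "\<lambda>x. \<pi> x < \<pi> h"
  have hn: "h \<notin> set B" using assms(3) unfolding hasdep_def dep_def by auto
  have d: "distinct (takeWhile ?P B) \<and> distinct (dropWhile ?P B) \<and> set (takeWhile ?P B) \<inter> set (dropWhile ?P B) = {}"
    using assms(1) unfolding okb_def by (metis distinct_append takeWhile_dropWhile_id)
  then have "distinct (ins' h B)" unfolding ins'_def using hn
    by (auto dest: set_takeWhileD set_dropWhileD)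
  moreover have "independent F sim (set (ins' h B))"
    using assms unfolding set_ins' okb_def independent_def hasdep_def dep_def
    by (auto dest: sym)
  ultimately show ?thesis unfolding okb_def ins'_def by simp
qed

lemma srt_ins':
  assumes "okb B" "h \<in> F" "\<not> hasdep h B" "sorted_wrt (\<lambda>f g. \<pi> f < \<pi> g) B"
  shows "sorted_wrt (\<lambda>f g. \<pi> f < \<pi> g) (ins' h B)"
proof -
  have "\<forall>x\<in>set B. \<pi> x \<noteq> \<pi> h"
  proof
    fix x assume x: "x \<in> set B"
    then have "x \<noteq> h" using assms(3) unfolding hasdep_def dep_def by auto
    moreover have "x \<in> F" using x okb_F[OF assms(1)] by auto
    ultimately show "\<pi> x \<noteq> \<pi> h" using pinj assms(2) by (metis inj_on_def)
  qed
  then show ?thesis using sorted_ins' assms(4) by blast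
qed

lemma sp_cons2: "sp (B # C # Bs) \<longleftrightarrow> okb B \<and> set C \<subseteq> Gamma_plus F sim (set B) \<and> sp (C # Bs)"
  by simp

lemma ins_main:
  assumes "sp Ws" "srt Ws" "h \<in> F"
  shows "concat (insb h Ws) = take (posb h Ws) (concat Ws) @ h # drop (posb h Ws) (concat Ws)
    \<and> sp (insb h Ws) \<and> srt (insb h Ws) \<and> posb h Ws \<le> length (concat Ws)
    \<and> (\<forall>x\<in>set (drop (posb h Ws) (concat Ws)). \<not> dep x h)
    \<and> (hasdep h (concat Ws) \<longrightarrow> hd (insb h Ws) = hd Ws \<and> length (hd Ws) \<le> posb h Ws)"
  using assms
proof (induction Ws)
  case Nil then show ?case by simp
next
  case (Cons B Bs)
  have okB: "okb B" using Cons.prems sp_hd by blast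
  have sB: "sorted_wrt (\<lambda>f g. \<pi> f < \<pi> g) B" using Cons.prems(2) unfolding srt_def by simp
  show ?case
  proof (cases "hasdep h (concat Bs)")
    case True
    then have ne: "Bs \<noteq> []" unfolding hasdep_def by auto
    then obtain C Cs where BC: "Bs = C # Cs" by (cases Bs) auto
    have spBs: "sp Bs" using sp_tl Cons.prems ne by blast
    have srtBs: "srt Bs" using Cons.prems(2) unfolding srt_def by simp
    note IH = Cons.IH[OF spBs srtBs Cons.prems(3)]
    have hdi: "hd (insb h Bs) = C" using IH True BC by simp
    have insne: "insb h Bs \<noteq> []" using IH sp_nonempty by blast
    then obtain C' Cs' where ie: "insb h Bs = C' # Cs'" by (cases "insb h Bs") auto
    have "C' = C" using hdi ie by simp
    have "set C \<subseteq> Gamma_plus F sim (set B)" using Cons.prems(1) BC by simp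
    then have spn: "sp (B # insb h Bs)" using ie \<open>C' = C\<close> IH okB by simp
    show ?thesis using True IH spn Cons.prems(2) sB
      by (simp add: srt_def take_append drop_append)
  next
    case False
    note F1 = False
    show ?thesis
    proof (cases "hasdep h B")
      case True
      show ?thesis
      proof (cases Bs)
        case Nil
        have "okb [h]" using Cons.prems(3) unfolding okb_def independent_def by simp
        moreover have "{h} \<subseteq> Gamma_plus F sim (set B)" using True gp_iff Cons.prems(3)
          unfolding hasdep_def by auto
        ultimately show ?thesis using Nil True okB sB by (simp add: srt_def)
      next
        case (Cons C Cs)
        have spC: "sp (C # Cs)" using Cons.prems \<open>Bs = C # Cs\<close> by simp
        have okC: "okb C" using sp_hd spC by blast
        have ndC: "\<not> hasdep h C" using F1 \<open>Bs = C # Cs\<close> unfolding hasdep_def by auto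
        have ndCs: "\<not> hasdep h (concat Cs)" using F1 \<open>Bs = C # Cs\<close> unfolding hasdep_def by auto
        have sC: "sorted_wrt (\<lambda>f g. \<pi> f < \<pi> g) C" using Cons.prems(2) \<open>Bs = C # Cs\<close> unfolding srt_def by simp
        have g1: "set (ins' h C) \<subseteq> Gamma_plus F sim (set B)"
          using Cons.prems(1) \<open>Bs = C # Cs\<close> True gp_iff[OF Cons.prems(3)] unfolding set_ins' hasdep_def by auto
        have sp2: "sp (ins' h C # Cs)"
        proof (cases Cs)
          case Nil then show ?thesis using okb_ins'[OF okC Cons.prems(3) ndC] by simp
        next
          case (Cons D Ds)
          have "set D \<subseteq> Gamma_plus F sim (set C)" using spC Cons by simp
          also have "\<dots> \<subseteq> Gamma_plus F sim (set (ins' h C))" by (rule gp_mono) (auto simp: set_ins')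
          finally show ?thesis using okb_ins'[OF okC Cons.prems(3) ndC] spC Cons by simp
        qed
        have tw: "take (length (takeWhile (\<lambda>x. \<pi> x < \<pi> h) C)) C = takeWhile (\<lambda>x. \<pi> x < \<pi> h) C"
          by (metis append_eq_conv_conj takeWhile_dropWhile_id)
        have dw: "drop (length (takeWhile (\<lambda>x. \<pi> x < \<pi> h) C)) C = dropWhile (\<lambda>x. \<pi> x < \<pi> h) C"
          by (metis append_eq_conv_conj takeWhile_dropWhile_id)
        have le: "length (takeWhile (\<lambda>x. \<pi> x < \<pi> h) C) \<le> length C" by (rule length_takeWhile_le)
        have c1: "concat (B # ins' h C # Cs) = take (length B + length (takeWhile (\<lambda>x. \<pi> x < \<pi> h) C)) (B @ C @ concat Cs)
            @ h # drop (length B + length (takeWhile (\<lambda>x. \<pi> x < \<pi> h) C)) (B @ C @ concat Cs)"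
          using tw dw le by (simp add: ins'_def take_append drop_append)
        have nd: "\<forall>x\<in>set (dropWhile (\<lambda>x. \<pi> x < \<pi> h) C @ concat Cs). \<not> dep x h"
          using ndC ndCs unfolding hasdep_def by (auto dest: set_dropWhileD)
        have "drop (length B + length (takeWhile (\<lambda>x. \<pi> x < \<pi> h) C)) (B @ C @ concat Cs)
           = dropWhile (\<lambda>x. \<pi> x < \<pi> h) C @ concat Cs"
          using dw le by (simp add: drop_append)
        moreover have "length (takeWhile (\<lambda>x. \<pi> x < \<pi> h) C) \<le> length C" by (rule length_takeWhile_le)
        ultimately show ?thesis
          using c1 nd F1 True \<open>Bs = C # Cs\<close> okB g1 sp2 srt_ins'[OF okC Cons.prems(3) ndC sC] Cons.prems(2)
          by (simp add: srt_def)
      qed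
    next
      case False
      have sp1: "sp (ins' h B # Bs)"
      proof (cases Bs)
        case Nil then show ?thesis using okb_ins'[OF okB Cons.prems(3) False] by simp
      next
        case (Cons D Ds)
        have "set D \<subseteq> Gamma_plus F sim (set B)" using Cons.prems(1) Cons by simp
        also have "\<dots> \<subseteq> Gamma_plus F sim (set (ins' h B))" by (rule gp_mono) (auto simp: set_ins')
        finally show ?thesis using okb_ins'[OF okB Cons.prems(3) False] Cons.prems(1) Cons by simp
      qed
      have B: "B = takeWhile (\<lambda>x. \<pi> x < \<pi> h) B @ dropWhile (\<lambda>x. \<pi> x < \<pi> h) B" by simp
      have tw: "take (length (takeWhile (\<lambda>x. \<pi> x < \<pi> h) B)) B = takeWhile (\<lambda>x. \<pi> x < \<pi> h) B"
        by (metis append_eq_conv_conj takeWhile_dropWhile_id)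
      have dw: "drop (length (takeWhile (\<lambda>x. \<pi> x < \<pi> h) B)) B = dropWhile (\<lambda>x. \<pi> x < \<pi> h) B"
        by (metis append_eq_conv_conj takeWhile_dropWhile_id)
      have le: "length (takeWhile (\<lambda>x. \<pi> x < \<pi> h) B) \<le> length B" by (rule length_takeWhile_le)
      have c1: "concat (ins' h B # Bs) = take (length (takeWhile (\<lambda>x. \<pi> x < \<pi> h) B)) (B @ concat Bs)
            @ h # drop (length (takeWhile (\<lambda>x. \<pi> x < \<pi> h) B)) (B @ concat Bs)"
        using tw dw le by (simp add: ins'_def take_append drop_append)
      have d1: "drop (length (takeWhile (\<lambda>x. \<pi> x < \<pi> h) B)) (B @ concat Bs) = dropWhile (\<lambda>x. \<pi> x < \<pi> h) B @ concat Bs"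
        using dw le by (simp add: drop_append)
      have nd: "\<forall>x\<in>set (dropWhile (\<lambda>x. \<pi> x < \<pi> h) B @ concat Bs). \<not> dep x h"
        using False F1 unfolding hasdep_def by (auto dest: set_dropWhileD)
      have "length (takeWhile (\<lambda>x. \<pi> x < \<pi> h) B) \<le> length B" by (rule length_takeWhile_le)
      moreover have "\<not> hasdep h (B @ concat Bs)" using False F1 unfolding hasdep_def by auto
      ultimately show ?thesis using c1 d1 nd sp1 srt_ins'[OF okB Cons.prems(3) False sB] Cons.prems(2) F1 False
        by (simp add: srt_def)
    qed
  qed
qed

end


context L begin

lemma allnat: "(\<forall>r::nat. Q r) \<longleftrightarrow> Q 0 \<and> (\<forall>r. Q (Suc r))"
  by (metis nat.exhaust)

lemma sp_iff: "sp Ws \<longleftrightarrow> Ws \<noteq> [] \<and> (\<forall>b\<in>set Ws. okb b) \<and>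
   (\<forall>r. Suc r < length Ws \<longrightarrow> set (Ws ! Suc r) \<subseteq> Gamma_plus F sim (set (Ws ! r)))"
proof (induction Ws rule: sp.induct)
  case (3 B C Bs)
  have "(\<forall>r. Suc r < length (B # C # Bs) \<longrightarrow> set ((B # C # Bs) ! Suc r) \<subseteq> Gamma_plus F sim (set ((B # C # Bs) ! r)))
     \<longleftrightarrow> set C \<subseteq> Gamma_plus F sim (set B) \<and>
        (\<forall>r. Suc r < length (C # Bs) \<longrightarrow> set ((C # Bs) ! Suc r) \<subseteq> Gamma_plus F sim (set ((C # Bs) ! r)))"
    by (subst allnat) simp
  then show ?case using 3 by auto
qed auto

lemma sp_stable: "stable_partition F sim V Ws \<longleftrightarrow> V = concat Ws \<and> sp Ws"
proof -
  have a: "(\<forall>r. Suc r < length (map set Ws) \<longrightarrow> map set Ws ! Suc r \<subseteq> Gamma_plus F sim (map set Ws ! r))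
     \<longleftrightarrow> (\<forall>r. Suc r < length Ws \<longrightarrow> set (Ws ! Suc r) \<subseteq> Gamma_plus F sim (set (Ws ! r)))"
    by auto
  show ?thesis unfolding stable_partition_def stable_seq_def sp_iff[of Ws] a okb_def by auto
qed

lemma blocks_lt:
  assumes "sp (B1 # R1)" "sp (B2 # R2)" "B1 @ concat R1 = B2 @ concat R2" "length B1 < length B2"
  shows False
proof (cases R1)
  case Nil
  then have "B1 = B2 @ concat R2" using assms(3) by simp
  then have "length B2 \<le> length B1" by simp
  then show False using assms(4) by simp
next
  case (Cons C R1')
  have "sp (C # R1')" using assms(1) Cons by simp
  then have okC: "okb C" by (rule sp_hd)
  have okB2: "okb B2" using assms(2) by (rule sp_hd)
  have g: "set C \<subseteq> Gamma_plus F sim (set B1)" using assms(1) Cons by simp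
  have e: "B1 @ (C @ concat R1') = B2 @ concat R2" using assms(3) Cons by simp
  have "\<exists>us. B1 = B2 @ us \<and> us @ (C @ concat R1') = concat R2 \<or> B1 @ us = B2 \<and> C @ concat R1' = us @ concat R2"
    using append_eq_append_conv2[THEN iffD1, OF e] .
  then obtain us where us: "B1 = B2 @ us \<and> us @ (C @ concat R1') = concat R2 \<or> B1 @ us = B2 \<and> C @ concat R1' = us @ concat R2"
    by (rule exE)
  have "\<not> (B1 = B2 @ us)" using assms(4) by auto
  then have ys: "B2 = B1 @ us" "C @ concat R1' = us @ concat R2" using us by auto
  have Cne: "C \<noteq> []" using okC okb_def by blast
  have yne: "us \<noteq> []" using ys(1) assms(4) by auto
  have "hd (C @ concat R1') = hd (us @ concat R2)" using ys(2) by simp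
  then have hh: "hd C = hd us" using Cne yne by simp
  have cC: "hd C \<in> set C" using Cne by simp
  have cF: "hd C \<in> F" using okb_F[OF okC] cC by blast
  have "hd C \<in> Gamma_plus F sim (set B1)" using g cC by blast
  then obtain b where b: "b \<in> set B1" "dep b (hd C)" using gp_iff[OF cF] by blast
  have dis: "distinct (B1 @ us)" using okB2 ys(1) okb_def by simp
  have c2: "hd C \<in> set us" using hh yne by simp
  show False
  proof (cases "b = hd C")
    case True then show False using dis b(1) c2 by (simp add: disjoint_iff)
  next
    case False
    then have s: "sim b (hd C)" using b dep_def by auto
    have "independent F sim (set B2)" using okB2 okb_def by blast
    then have "\<forall>f\<in>set B2. \<forall>g\<in>set B2. f \<noteq> g \<longrightarrow> \<not> sim f g" unfolding independent_def by blast
    moreover have "b \<in> set B2" "hd C \<in> set B2" using b(1) c2 ys(1) by auto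
    ultimately show False using s False by blast
  qed
qed

lemma sp_concat_ne: "sp Ws \<Longrightarrow> concat Ws \<noteq> []"
proof (cases Ws)
  case (Cons B Bs)
  assume "sp Ws"
  then have "okb B" using Cons sp_hd by simp
  then show ?thesis using Cons okb_def by simp
qed simp

lemma sp_unique: "sp Ws1 \<Longrightarrow> sp Ws2 \<Longrightarrow> concat Ws1 = concat Ws2 \<Longrightarrow> Ws1 = Ws2"
proof (induction Ws1 arbitrary: Ws2)
  case Nil then show ?case by simp
next
  case (Cons B1 R1)
  obtain B2 R2 where W2: "Ws2 = B2 # R2" using Cons.prems(2) sp_nonempty by (cases Ws2) auto
  have e: "B1 @ concat R1 = B2 @ concat R2" using Cons.prems(3) W2 by simp
  have sp2: "sp (B2 # R2)" using Cons.prems(2) W2 by simp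
  have n1: "\<not> length B1 < length B2" using blocks_lt[OF Cons.prems(1) sp2 e] by blast
  have n2: "\<not> length B2 < length B1" using blocks_lt[OF sp2 Cons.prems(1) e[symmetric]] by blast
  have lB: "length B1 = length B2" using n1 n2 by simp
  then have B: "B1 = B2" and R: "concat R1 = concat R2" using e by (auto simp: append_eq_append_conv)
  show ?case
  proof (cases "R1 = []")
    case True
    then have c: "concat R2 = []" using R by simp
    have "R2 = []"
    proof (rule ccontr)
      assume "R2 \<noteq> []"
      then have "sp R2" using sp_tl[OF sp2] by blast
      then show False using sp_concat_ne c by blast
    qed
    then show ?thesis using True B W2 by simp
  next
    case False
    have s1: "sp R1" using sp_tl[OF Cons.prems(1) False] .
    have "R2 \<noteq> []"
    proof
      assume "R2 = []"
      then have "concat R1 = []" using R by simp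
      then show False using sp_concat_ne s1 by blast
    qed
    then have s2: "sp R2" using sp_tl[OF sp2] by blast
    have "R1 = R2" using Cons.IH[OF s1 s2 R] .
    then show ?thesis using B W2 by simp
  qed
qed

definition PW :: "'a set list \<Rightarrow> 'a set list list" where
  "PW V = (THE Ws. stable_partition F sim V Ws)"

lemma PW_eq: assumes "sp Ws" shows "PW (concat Ws) = Ws"
  unfolding PW_def
proof (rule the_equality)
  show "stable_partition F sim (concat Ws) Ws" using assms sp_stable by simp
next
  fix Ws' assume "stable_partition F sim (concat Ws) Ws'"
  then have "concat Ws = concat Ws'" "sp Ws'" using sp_stable by auto
  then show "Ws' = Ws" using sp_unique assms by metis
qed

definition wup :: "'a set list \<Rightarrow> 'a set list" where
  "wup w = (case fh of None \<Rightarrow> w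
     | Some f \<Rightarrow> take (Suc (GREATEST i. i < length w \<and> w ! i = f)) w)"

lemma W_upto_eq: "W_upto fh \<tau> = wup (word \<tau>)"
  by (simp add: W_upto_def wup_def split: option.split)

lemma wup_char:
  assumes "fh = Some f" "w = u @ rest" "u \<noteq> []" "last u = f" "f \<notin> set rest"
  shows "wup w = u"
proof -
  have G: "(GREATEST i. i < length w \<and> w ! i = f) = length u - 1"
  proof (rule Greatest_equality)
    have lu: "0 < length u" using assms(3) by simp
    have l1: "length u - 1 < length w" using lu unfolding assms(2) length_append by linarith
    have l2: "w ! (length u - 1) = f" using lu assms by (simp add: nth_append last_conv_nth)
    show "length u - 1 < length w \<and> w ! (length u - 1) = f" using l1 l2 by blast
  next
    fix y assume y: "y < length w \<and> w ! y = f"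
    show "y \<le> length u - 1"
    proof (rule ccontr)
      assume "\<not> y \<le> length u - 1"
      then have "y \<ge> length u" by simp
      then have "w ! y = rest ! (y - length u)" "y - length u < length rest" using assms(2) y by (auto simp: nth_append)
      then show False using y assms(5) by (metis nth_mem)
    qed
  qed
  show ?thesis unfolding wup_def using G assms by simp
qed

lemma wup_ex:
  assumes "fh = Some f" "f \<in> set w"
  shows "\<exists>rest. w = wup w @ rest \<and> wup w \<noteq> [] \<and> last (wup w) = f \<and> f \<notin> set rest"
proof -
  obtain ys zs where "w = ys @ f # zs" "f \<notin> set zs" using split_list_last[OF assms(2)] by blast
  then have "wup w = ys @ [f]" using wup_char[OF assms(1), of w "ys @ [f]" zs] by simp
  then show ?thesis using \<open>w = ys @ f # zs\<close> \<open>f \<notin> set zs\<close> by auto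
qed

definition INV :: "'a set list \<Rightarrow> bool" where
  "INV w = (case fh of None \<Rightarrow> w = [] \<or> (\<exists>Ws. sp Ws \<and> srt Ws \<and> concat Ws = rev w)
     | Some f \<Rightarrow> (f \<in> set w \<longrightarrow> (\<exists>Ws. sp Ws \<and> srt Ws \<and> concat Ws = rev (wup w) \<and> hd Ws = [f])))"

definition kpos :: "'a set \<Rightarrow> 'a set list \<Rightarrow> nat" where
  "kpos h w = (case fh of None \<Rightarrow> if w = [] then 0 else length w - posb h (PW (rev w))
     | Some f \<Rightarrow> if f \<notin> set w then 0
         else if hasdep h (wup w) then length (wup w) - posb h (PW (rev (wup w))) else length (wup w))"

definition ins_at :: "nat \<Rightarrow> 'a set \<Rightarrow> 'a set list \<Rightarrow> 'a set list" where
  "ins_at k h w = take k w @ h # drop k w"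

lemma rev_core:
  assumes "sp Ws" "srt Ws" "concat Ws = rev u" "h \<in> F"
  defines "k \<equiv> length u - posb h Ws"
  shows "k \<le> length u \<and> (\<forall>g\<in>set (take k u). \<not> dep g h) \<and>
     concat (insb h Ws) = rev (take k u @ h # drop k u) \<and> sp (insb h Ws) \<and> srt (insb h Ws) \<and>
     (hasdep h u \<longrightarrow> hd (insb h Ws) = hd Ws \<and> k < length u)"
proof -
  let ?V = "rev u" let ?p = "posb h Ws"
  note M = ins_main[OF assms(1,2,4)]
  have lV: "length (concat Ws) = length u" using assms(3) by simp
  have p: "?p \<le> length u" using M lV by simp
  have t: "take k u = rev (drop ?p ?V)" unfolding k_def using p by (simp add: rev_drop)
  have d: "drop k u = rev (take ?p ?V)" unfolding k_def using p by (simp add: rev_take)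
  have r: "rev (take k u @ h # drop k u) = take ?p ?V @ h # drop ?p ?V" using t d by simp
  have hd1: "hasdep h u \<longrightarrow> hd (insb h Ws) = hd Ws \<and> k < length u"
  proof
    assume hu: "hasdep h u"
    then have "hasdep h (concat Ws)" using assms(3) unfolding hasdep_def by simp
    then have a: "hd (insb h Ws) = hd Ws" "length (hd Ws) \<le> ?p" using M by auto
    have "hd Ws \<noteq> []" using assms(1) sp_nonempty sp_hd okb_def by (metis list.collapse)
    then have "?p > 0" using a(2) by (metis le_zero_eq length_0_conv neq0_conv)
    moreover have "u \<noteq> []" using hu hasdep_def by auto
    ultimately show "hd (insb h Ws) = hd Ws \<and> k < length u" using a(1) k_def by simp
  qed
  have c1: "k \<le> length u" by (simp add: k_def)
  have c2: "\<forall>g\<in>set (take k u). \<not> dep g h"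
  proof
    fix g assume "g \<in> set (take k u)"
    then have "g \<in> set (drop ?p (concat Ws))" using t assms(3) by simp
    then show "\<not> dep g h" using M by blast
  qed
  have c3: "concat (insb h Ws) = rev (take k u @ h # drop k u)" using M r assms(3) by simp
  show ?thesis using c1 c2 c3 hd1 M by blast
qed


end


context L begin

lemma first_occ: "x \<notin> set xs \<Longrightarrow> x \<notin> set xs' \<Longrightarrow> xs @ x # ys = xs' @ x # ys' \<Longrightarrow> xs = xs' \<and> ys = ys'"
proof (induction xs arbitrary: xs')
  case Nil then show ?case by (cases xs') auto
next
  case (Cons a xs) then show ?case by (cases xs') auto
qed

lemma wup_None: "fh = None \<Longrightarrow> wup w = w"
  unfolding wup_def by simp

lemma INV_N: "fh = None \<Longrightarrow> INV w \<longleftrightarrow> (w = [] \<or> (\<exists>Ws. sp Ws \<and> srt Ws \<and> concat Ws = rev w))"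
  unfolding INV_def by simp

lemma INV_S: "fh = Some f \<Longrightarrow> INV w \<longleftrightarrow> (f \<in> set w \<longrightarrow> (\<exists>Ws. sp Ws \<and> srt Ws \<and> concat Ws = rev (wup w) \<and> hd Ws = [f]))"
  unfolding INV_def by simp

lemma kpos_N: "fh = None \<Longrightarrow> kpos h w = (if w = [] then 0 else length w - posb h (PW (rev w)))"
  unfolding kpos_def by simp

lemma kpos_S: "fh = Some f \<Longrightarrow> kpos h w = (if f \<notin> set w then 0
         else if hasdep h (wup w) then length (wup w) - posb h (PW (rev (wup w))) else length (wup w))"
  unfolding kpos_def by simp

lemma kpos_None:
  assumes "fh = None" "INV w" "h \<in> F"
  shows "kpos h w \<le> length w \<and> (\<forall>g\<in>set (take (kpos h w) w). \<not> dep g h) \<and> INV (ins_at (kpos h w) h w)"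
proof (cases "w = []")
  case True
  have k: "kpos h w = 0" using kpos_N[OF assms(1)] True by simp
  have "sp [[h]]" "srt [[h]]" using assms(3) by (auto simp: okb_def independent_def srt_def)
  then have "INV [h]" unfolding INV_N[OF assms(1)] by (intro disjI2 exI[of _ "[[h]]"]) simp
  then show ?thesis using k True by (simp add: ins_at_def)
next
  case False
  obtain Ws where W: "sp Ws" "srt Ws" "concat Ws = rev w" using assms(2) False unfolding INV_N[OF assms(1)] by auto
  have PW: "PW (rev w) = Ws" using PW_eq[OF W(1)] W(3) by simp
  have k: "kpos h w = length w - posb h Ws" using kpos_N[OF assms(1)] False PW by simp
  note R = rev_core[OF W assms(3)]
  have "INV (ins_at (kpos h w) h w)" unfolding INV_N[OF assms(1)] using R k
    by (intro disjI2 exI[of _ "insb h Ws"]) (simp add: ins_at_def)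
  then show ?thesis using R k by simp
qed

lemma sp_single: "h \<in> F \<Longrightarrow> sp [[h]] \<and> srt [[h]]"
  by (auto simp: okb_def independent_def srt_def)

lemma kpos_Some:
  assumes "fh = Some f" "INV w" "h \<in> F"
  defines "k \<equiv> kpos h w"
  shows "k \<le> length w \<and> (\<forall>g\<in>set (take k w). \<not> dep g h) \<and> INV (ins_at k h w) \<and>
    ((f \<notin> set w \<and> k = 0) \<or>
     (f \<in> set w \<and> k = length (wup w) \<and> take k w = wup w \<and> wup (ins_at k h w) = wup w \<and> h \<notin> set (wup w)) \<or>
     (f \<in> set w \<and> k < length (wup w) \<and> take k w = take k (wup w) \<and>
        wup (ins_at k h w) = take k (wup w) @ h # drop k (wup w)))"
proof (cases "f \<in> set w")
  case False
  have k0: "k = 0" unfolding k_def kpos_S[OF assms(1)] using False by simp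
  have fF: "f \<in> F" using fhF assms(1) by simp
  have "INV (h # w)"
  proof -
    have "f \<in> set (h # w) \<Longrightarrow> wup (h # w) = [f]"
      using wup_char[OF assms(1), of "h # w" "[f]" w] False by auto
    then show ?thesis unfolding INV_S[OF assms(1)] using sp_single[OF fF] by (auto intro!: exI[of _ "[[f]]"])
  qed
  then show ?thesis using k0 False by (simp add: ins_at_def)
next
  case True
  obtain rest where u: "w = wup w @ rest" "wup w \<noteq> []" "last (wup w) = f" "f \<notin> set rest"
    using wup_ex[OF assms(1) True] by blast
  define u where "u = wup w"
  have u': "w = u @ rest" "u \<noteq> []" "last u = f" using u u_def by auto
  have fu: "f \<in> set u" using u'(2,3) by (metis last_in_set)
  obtain Ws where W: "sp Ws" "srt Ws" "concat Ws = rev u" "hd Ws = [f]"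
    using assms(2) True unfolding INV_S[OF assms(1)] u_def by auto
  have PW: "PW (rev u) = Ws" using PW_eq[OF W(1)] W(3) by simp
  show ?thesis
  proof (cases "hasdep h u")
    case True
    have k: "k = length u - posb h Ws" unfolding k_def kpos_S[OF assms(1)] using \<open>f \<in> set w\<close> True PW u_def by simp
    note R = rev_core[OF W(1-3) assms(3), folded k]
    have kl: "k < length u" using R True by blast
    have tk: "take k w = take k u" using u'(1) kl by simp
    have dk: "drop k w = drop k u @ rest" using u'(1) kl by simp
    define u2 where "u2 = take k u @ h # drop k u"
    have ins: "ins_at k h w = u2 @ rest" unfolding ins_at_def u2_def using tk dk by simp
    have "last u2 = f" unfolding u2_def using kl u'(3) by simp
    then have wu2: "wup (ins_at k h w) = u2" using wup_char[OF assms(1) ins] u'(2) u(4) u2_def by simp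
    have c3: "concat (insb h Ws) = rev u2" using R u2_def by blast
    have "hd (insb h Ws) = [f]" using R True W(4) by simp
    then have inv: "INV (ins_at k h w)" unfolding INV_S[OF assms(1)] wu2 using R c3
      by (intro impI exI[of _ "insb h Ws"]) blast
    have nd: "\<forall>g\<in>set (take k w). \<not> dep g h" using R tk by simp
    have kw: "k \<le> length w" using kl u'(1) by simp
    show ?thesis unfolding u_def[symmetric] using kw nd inv kl tk wu2 u2_def \<open>f \<in> set w\<close> by blast
  next
    case False
    have k: "k = length u" unfolding k_def kpos_S[OF assms(1)] using \<open>f \<in> set w\<close> False u_def by simp
    have tk: "take k w = u" using u'(1) k by simp
    have dk: "drop k w = rest" using u'(1) k by simp
    have hf: "h \<noteq> f" using False fu unfolding hasdep_def dep_def by auto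
    have ins: "ins_at k h w = u @ (h # rest)" unfolding ins_at_def using tk dk by simp
    have wu: "wup (ins_at k h w) = u" using wup_char[OF assms(1) ins] u'(2,3) u(4) hf by simp
    have nd: "\<forall>g\<in>set (take k w). \<not> dep g h" using tk False unfolding hasdep_def by simp
    have hu: "h \<notin> set u" using False unfolding hasdep_def dep_def by auto
    have inv: "INV (ins_at k h w)" unfolding INV_S[OF assms(1)] wu using W by blast
    have kw: "k \<le> length w" using k u'(1) by simp
    show ?thesis unfolding u_def[symmetric] using kw nd inv k tk wu hu \<open>f \<in> set w\<close> by blast
  qed
qed

lemma det_N:
  assumes "fh = None" "INV w1" "INV w2" "h \<in> F"
    and e: "ins_at (kpos h w1) h w1 = ins_at (kpos h w2) h w2"
  shows "kpos h w1 = kpos h w2 \<and> take (kpos h w1) w1 = take (kpos h w2) w2 \<and> w1 = w2"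
proof -
  note K1 = kpos_None[OF assms(1,2,4)] and K2 = kpos_None[OF assms(1,3,4)]
  have n1: "h \<notin> set (take (kpos h w1) w1)" using K1 unfolding dep_def by blast
  have n2: "h \<notin> set (take (kpos h w2) w2)" using K2 unfolding dep_def by blast
  have "take (kpos h w1) w1 = take (kpos h w2) w2 \<and> drop (kpos h w1) w1 = drop (kpos h w2) w2"
    using first_occ[OF n1 n2] e unfolding ins_at_def by blast
  moreover have "length (take (kpos h w1) w1) = kpos h w1" "length (take (kpos h w2) w2) = kpos h w2"
    using K1 K2 by auto
  ultimately show ?thesis by (metis append_take_drop_id)
qed

lemma cls:
  assumes "fh = Some f" "INV w" "h \<in> F" "k = kpos h w" "f \<in> set (ins_at k h w)"
  shows "(f \<notin> set w \<and> k = 0 \<and> wup (ins_at k h w) = [h])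
   \<or> (f \<in> set w \<and> wup (ins_at k h w) = wup w \<and> h \<notin> set (wup w) \<and> take k w = wup w \<and> k = length (wup w))
   \<or> (f \<in> set w \<and> k < length (wup w) \<and> take k w = take k (wup w) \<and> h \<notin> set (take k w) \<and>
       wup (ins_at k h w) = take k (wup w) @ h # drop k (wup w))"
proof -
  note K = kpos_Some[OF assms(1-3), folded assms(4)]
  have nh: "h \<notin> set (take k w)" using K unfolding dep_def by blast
  show ?thesis
  proof (cases "f \<in> set w")
    case False
    then have k0: "k = 0" using K by blast
    then have i: "ins_at k h w = h # w" by (simp add: ins_at_def)
    then have hf: "h = f" using assms(5) False by simp
    have "wup (ins_at k h w) = [f]" using wup_char[OF assms(1), of "ins_at k h w" "[f]" w] i hf False by simp
    then show ?thesis using False k0 hf by simp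
  next
    case True
    then show ?thesis using K nh by blast
  qed
qed

lemma det_S:
  assumes "fh = Some f" "INV w1" "INV w2" "h \<in> F"
    and e: "wup (ins_at (kpos h w1) h w1) = wup (ins_at (kpos h w2) h w2)"
    and f1: "f \<in> set (ins_at (kpos h w1) h w1)" and f2: "f \<in> set (ins_at (kpos h w2) h w2)"
  shows "(f \<notin> set w1 \<and> f \<notin> set w2 \<and> kpos h w1 = 0 \<and> kpos h w2 = 0) \<or>
    (kpos h w1 = kpos h w2 \<and> take (kpos h w1) w1 = take (kpos h w2) w2 \<and> wup w1 = wup w2 \<and> f \<in> set w1 \<and> f \<in> set w2)"
proof -
  define k1 where "k1 = kpos h w1"
  define k2 where "k2 = kpos h w2"
  define U where "U = wup (ins_at k1 h w1)"
  have U2: "U = wup (ins_at k2 h w2)" using e U_def k1_def k2_def by simp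
  note C1 = cls[OF assms(1,2,4) k1_def f1[folded k1_def], folded U_def]
  note C2 = cls[OF assms(1,3,4) k2_def f2[folded k2_def], folded U2]
  have lenB2: "length (take k (wup w) @ h # drop k (wup w)) \<ge> 2" if "k < length (wup w)" for k w
    using that by simp
  show ?thesis
  proof (cases "h \<in> set U")
    case False
    then have b1: "f \<in> set w1 \<and> U = wup w1 \<and> take k1 w1 = wup w1 \<and> k1 = length (wup w1)" using C1 by auto
    have b2: "f \<in> set w2 \<and> U = wup w2 \<and> take k2 w2 = wup w2 \<and> k2 = length (wup w2)" using C2 False by auto
    have "k1 = k2 \<and> take k1 w1 = take k2 w2 \<and> wup w1 = wup w2 \<and> f \<in> set w1 \<and> f \<in> set w2"
      using b1 b2 by metis
    then show ?thesis unfolding k1_def[symmetric] k2_def[symmetric] by blast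
  next
    case True
    show ?thesis
    proof (cases "length U = 1")
      case True
      have a1: "f \<notin> set w1 \<and> k1 = 0" using C1 True \<open>h \<in> set U\<close> lenB2 by fastforce
      have a2: "f \<notin> set w2 \<and> k2 = 0" using C2 True \<open>h \<in> set U\<close> lenB2 by fastforce
      show ?thesis unfolding k1_def[symmetric] k2_def[symmetric] using a1 a2 by simp
    next
      case False
      have b1: "f \<in> set w1 \<and> k1 < length (wup w1) \<and> take k1 w1 = take k1 (wup w1) \<and> h \<notin> set (take k1 w1) \<and>
        U = take k1 (wup w1) @ h # drop k1 (wup w1)" using C1 False \<open>h \<in> set U\<close> by auto
      have b2: "f \<in> set w2 \<and> k2 < length (wup w2) \<and> take k2 w2 = take k2 (wup w2) \<and> h \<notin> set (take k2 w2) \<and>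
        U = take k2 (wup w2) @ h # drop k2 (wup w2)" using C2 False \<open>h \<in> set U\<close> by auto
      have n1: "h \<notin> set (take k1 (wup w1))" and n2: "h \<notin> set (take k2 (wup w2))" using b1 b2 by auto
      have eq: "take k1 (wup w1) = take k2 (wup w2) \<and> drop k1 (wup w1) = drop k2 (wup w2)"
        using first_occ[OF n1 n2] b1 b2 by metis
      have "length (take k1 (wup w1)) = k1" "length (take k2 (wup w2)) = k2" using b1 b2 by auto
      then have kk: "k1 = k2" using eq by metis
      have "wup w1 = wup w2" using eq by (metis append_take_drop_id)
      then show ?thesis unfolding k1_def[symmetric] k2_def[symmetric] using kk b1 b2 eq by simp
    qed
  qed
qed

end


context L begin

lemma walk_from_append: "walk_from \<Omega> F \<rho> \<sigma> (xs @ ys) \<longleftrightarrow>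
   walk_from \<Omega> F \<rho> \<sigma> xs \<and> walk_from \<Omega> F \<rho> (last (\<sigma> # map snd xs)) ys"
  by (induction xs arbitrary: \<sigma>) auto

lemma step_F: "step \<Omega> F \<rho> \<sigma> f \<sigma>' \<Longrightarrow> f \<in> F"
  unfolding step_def flaws_at_def by simp

lemma walk_F: "walk_from \<Omega> F \<rho> \<sigma> xs \<Longrightarrow> set (map fst xs) \<subseteq> F"
proof (induction xs arbitrary: \<sigma>)
  case (Cons p xs)
  obtain f s where p: "p = (f, s)" by (cases p)
  then have "step \<Omega> F \<rho> \<sigma> f s" "walk_from \<Omega> F \<rho> s xs" using Cons.prems by auto
  then show ?case using Cons.IH[of s] p step_F by auto
qed simp

lemma swap_res:
  assumes "step \<Omega> F \<rho> \<sigma> h s1" "step \<Omega> F \<rho> s1 g t1" "\<not> sim h g"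
  shows "\<exists>a. SWAP (\<sigma>, [(h, s1), (g, t1)]) = (\<sigma>, [(g, a), (h, t1)]) \<and> step \<Omega> F \<rho> \<sigma> g a \<and> step \<Omega> F \<rho> a h t1"
  using swm assms unfolding swap_map_def by blast

lemma swap_inj:
  assumes "step \<Omega> F \<rho> \<sigma> h s1" "step \<Omega> F \<rho> s1 g t1" "\<not> sim h g"
    "step \<Omega> F \<rho> \<sigma> h s2" "step \<Omega> F \<rho> s2 g t2"
    "SWAP (\<sigma>, [(h, s1), (g, t1)]) = SWAP (\<sigma>, [(h, s2), (g, t2)])"
  shows "s1 = s2 \<and> t1 = t2"
proof -
  have "inj_on SWAP {(\<sigma>1, [(f, \<sigma>2), (g, \<sigma>3)]) | \<sigma>1 f \<sigma>2 g \<sigma>3.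
                    step \<Omega> F \<rho> \<sigma>1 f \<sigma>2 \<and> step \<Omega> F \<rho> \<sigma>2 g \<sigma>3 \<and> \<not> sim f g}"
    using swm unfolding swap_map_def by blast
  moreover have "(\<sigma>, [(h, s1), (g, t1)]) \<in> {(\<sigma>1, [(f, \<sigma>2), (g, \<sigma>3)]) | \<sigma>1 f \<sigma>2 g \<sigma>3.
                    step \<Omega> F \<rho> \<sigma>1 f \<sigma>2 \<and> step \<Omega> F \<rho> \<sigma>2 g \<sigma>3 \<and> \<not> sim f g}"
    using assms by blast
  moreover have "(\<sigma>, [(h, s2), (g, t2)]) \<in> {(\<sigma>1, [(f, \<sigma>2), (g, \<sigma>3)]) | \<sigma>1 f \<sigma>2 g \<sigma>3.
                    step \<Omega> F \<rho> \<sigma>1 f \<sigma>2 \<and> step \<Omega> F \<rho> \<sigma>2 g \<sigma>3 \<and> \<not> sim f g}"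
    using assms by blast
  ultimately have "(\<sigma>, [(h, s1), (g, t1)]) = (\<sigma>, [(h, s2), (g, t2)])"
    using assms(6) unfolding inj_on_def by blast
  then show ?thesis by simp
qed

fun bub :: "nat \<Rightarrow> 'a \<Rightarrow> ('a set \<times> 'a) list \<Rightarrow> ('a set \<times> 'a) list" where
  "bub 0 \<sigma> xs = xs"
| "bub (Suc k) \<sigma> (x # y # rest) = (let ys = snd (SWAP (\<sigma>, [x, y])) in hd ys # bub k (snd (hd ys)) (ys ! 1 # rest))"
| "bub (Suc k) \<sigma> [] = []"
| "bub (Suc k) \<sigma> [x] = [x]"

abbreviation VS where "VS \<equiv> valid_swap \<Omega> F \<rho> sim SWAP"

lemma nodep_sim: "\<not> dep g h \<Longrightarrow> \<not> sim h g \<and> h \<noteq> g"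
  unfolding dep_def using sym by blast

lemma bub_props:
  assumes "walk_from \<Omega> F \<rho> \<sigma> ((h, s) # zs)" "k \<le> length zs"
    "\<forall>g\<in>set (take k (map fst zs)). \<not> dep g h"
  shows "walk_from \<Omega> F \<rho> \<sigma> (bub k \<sigma> ((h, s) # zs)) \<and>
    map fst (bub k \<sigma> ((h, s) # zs)) = take k (map fst zs) @ h # drop k (map fst zs) \<and>
    drop (Suc k) (bub k \<sigma> ((h, s) # zs)) = drop k zs \<and>
    length (bub k \<sigma> ((h, s) # zs)) = Suc (length zs) \<and>
    (\<forall>\<sigma>0 pre. \<sigma>0 \<in> \<Omega> \<longrightarrow> walk_from \<Omega> F \<rho> \<sigma>0 pre \<longrightarrow> last (\<sigma>0 # map snd pre) = \<sigma> \<longrightarrow>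
       VS\<^sup>*\<^sup>* (\<sigma>0, pre @ (h, s) # zs) (\<sigma>0, pre @ bub k \<sigma> ((h, s) # zs)))"
  using assms
proof (induction k arbitrary: \<sigma> s zs)
  case 0 then show ?case by simp
next
  case (Suc k)
  obtain g t zs' where zs: "zs = (g, t) # zs'" using Suc.prems(2) by (cases zs) auto
  have st1: "step \<Omega> F \<rho> \<sigma> h s" and st2: "step \<Omega> F \<rho> s g t" and wr: "walk_from \<Omega> F \<rho> t zs'"
    using Suc.prems(1) zs by auto
  have "\<not> dep g h" using Suc.prems(3) zs by simp
  then have ns: "\<not> sim h g" and hg: "h \<noteq> g" using nodep_sim by auto
  obtain a where a: "SWAP (\<sigma>, [(h, s), (g, t)]) = (\<sigma>, [(g, a), (h, t)])" "step \<Omega> F \<rho> \<sigma> g a" "step \<Omega> F \<rho> a h t"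
    using swap_res[OF st1 st2 ns] by blast
  have b: "bub (Suc k) \<sigma> ((h, s) # zs) = (g, a) # bub k a ((h, t) # zs')"
    using a(1) zs by simp
  have w2: "walk_from \<Omega> F \<rho> a ((h, t) # zs')" using a(3) wr by simp
  have k2: "k \<le> length zs'" using Suc.prems(2) zs by simp
  have n2: "\<forall>g\<in>set (take k (map fst zs')). \<not> dep g h" using Suc.prems(3) zs by simp
  note IH = Suc.IH[OF w2 k2 n2]
  have c5: "\<forall>\<sigma>0 pre. \<sigma>0 \<in> \<Omega> \<longrightarrow> walk_from \<Omega> F \<rho> \<sigma>0 pre \<longrightarrow> last (\<sigma>0 # map snd pre) = \<sigma> \<longrightarrow>
       VS\<^sup>*\<^sup>* (\<sigma>0, pre @ (h, s) # zs) (\<sigma>0, pre @ bub (Suc k) \<sigma> ((h, s) # zs))"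
  proof (intro allI impI)
    fix \<sigma>0 pre assume o: "\<sigma>0 \<in> \<Omega>" and wp: "walk_from \<Omega> F \<rho> \<sigma>0 pre" and l: "last (\<sigma>0 # map snd pre) = \<sigma>"
    have iw: "is_walk \<Omega> F \<rho> (\<sigma>0, pre @ [(h, s), (g, t)] @ zs')"
      unfolding is_walk_def using o wp l Suc.prems(1) zs by (simp add: walk_from_append)
    have sw: "snd (SWAP (last_state (\<sigma>0, pre), [(h, s), (g, t)])) = [(g, a), (h, t)]"
      using a(1) l by (simp add: last_state_def)
    have vs: "VS (\<sigma>0, pre @ [(h, s), (g, t)] @ zs') (\<sigma>0, pre @ [(g, a), (h, t)] @ zs')"
      unfolding valid_swap_def
      by (intro conjI[OF iw] exI[of _ \<sigma>0] exI[of _ pre] exI[of _ h] exI[of _ s] exI[of _ g] exI[of _ t] exI[of _ zs'])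
         (use ns hg sw in simp)
    have wp2: "walk_from \<Omega> F \<rho> \<sigma>0 (pre @ [(g, a)])" using wp l a(2) by (simp add: walk_from_append)
    have l2: "last (\<sigma>0 # map snd (pre @ [(g, a)])) = a" by simp
    have "VS\<^sup>*\<^sup>* (\<sigma>0, (pre @ [(g, a)]) @ (h, t) # zs') (\<sigma>0, (pre @ [(g, a)]) @ bub k a ((h, t) # zs'))"
      using IH o wp2 l2 by blast
    then have "VS\<^sup>*\<^sup>* (\<sigma>0, pre @ [(g, a), (h, t)] @ zs') (\<sigma>0, pre @ bub (Suc k) \<sigma> ((h, s) # zs))"
      using b by simp
    then show "VS\<^sup>*\<^sup>* (\<sigma>0, pre @ (h, s) # zs) (\<sigma>0, pre @ bub (Suc k) \<sigma> ((h, s) # zs))"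
      using vs zs by (simp add: converse_rtranclp_into_rtranclp)
  qed
  show ?case using IH b a(2) zs c5 by simp
qed

lemma bub_prefix:
  assumes "walk_from \<Omega> F \<rho> \<sigma> ((h, s1) # P1)" "walk_from \<Omega> F \<rho> \<sigma> ((h, s2) # P2)"
    "k \<le> length P1" "k \<le> length P2" "take k (map fst P1) = take k (map fst P2)"
    "\<forall>g\<in>set (take k (map fst P1)). \<not> dep g h"
    "take j (bub k \<sigma> ((h, s1) # P1)) = take j (bub k \<sigma> ((h, s2) # P2))" "Suc k \<le> j"
  shows "s1 = s2 \<and> take (j - 1) P1 = take (j - 1) P2"
  using assms
proof (induction k arbitrary: \<sigma> s1 s2 P1 P2 j)
  case 0
  then obtain j' where "j = Suc j'" by (cases j) auto
  then show ?case using 0 by simp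
next
  case (Suc k)
  obtain g t1 R1 where P1: "P1 = (g, t1) # R1" using Suc.prems(3) by (cases P1) auto
  obtain g2 t2 R2 where P2: "P2 = (g2, t2) # R2" using Suc.prems(4) by (cases P2) auto
  have gg: "g2 = g" using Suc.prems(5) P1 P2 by simp
  have st1: "step \<Omega> F \<rho> \<sigma> h s1" "step \<Omega> F \<rho> s1 g t1" "walk_from \<Omega> F \<rho> t1 R1" using Suc.prems(1) P1 by auto
  have st2: "step \<Omega> F \<rho> \<sigma> h s2" "step \<Omega> F \<rho> s2 g t2" "walk_from \<Omega> F \<rho> t2 R2" using Suc.prems(2) P2 gg by auto
  have "\<not> dep g h" using Suc.prems(6) P1 by simp
  then have ns: "\<not> sim h g" using nodep_sim by auto
  obtain a1 where a1: "SWAP (\<sigma>, [(h, s1), (g, t1)]) = (\<sigma>, [(g, a1), (h, t1)])" "step \<Omega> F \<rho> \<sigma> g a1" "step \<Omega> F \<rho> a1 h t1"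
    using swap_res[OF st1(1,2) ns] by blast
  obtain a2 where a2: "SWAP (\<sigma>, [(h, s2), (g, t2)]) = (\<sigma>, [(g, a2), (h, t2)])" "step \<Omega> F \<rho> \<sigma> g a2" "step \<Omega> F \<rho> a2 h t2"
    using swap_res[OF st2(1,2) ns] by blast
  have b1: "bub (Suc k) \<sigma> ((h, s1) # P1) = (g, a1) # bub k a1 ((h, t1) # R1)" using a1(1) P1 by simp
  have b2: "bub (Suc k) \<sigma> ((h, s2) # P2) = (g, a2) # bub k a2 ((h, t2) # R2)" using a2(1) P2 gg by simp
  obtain j' where j: "j = Suc j'" using Suc.prems(8) by (cases j) auto
  have aa: "a1 = a2" and tt: "take j' (bub k a1 ((h, t1) # R1)) = take j' (bub k a1 ((h, t2) # R2))"
    using Suc.prems(7) b1 b2 j by auto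
  have IH: "t1 = t2 \<and> take (j' - 1) R1 = take (j' - 1) R2"
  proof (rule Suc.IH)
    show "walk_from \<Omega> F \<rho> a1 ((h, t1) # R1)" using a1(3) st1(3) by simp
    show "walk_from \<Omega> F \<rho> a1 ((h, t2) # R2)" using a2(3) st2(3) aa by simp
    show "k \<le> length R1" "k \<le> length R2" using Suc.prems(3,4) P1 P2 by auto
    show "take k (map fst R1) = take k (map fst R2)" using Suc.prems(5) P1 P2 by simp
    show "\<forall>g\<in>set (take k (map fst R1)). \<not> dep g h" using Suc.prems(6) P1 by simp
    show "take j' (bub k a1 ((h, t1) # R1)) = take j' (bub k a1 ((h, t2) # R2))" by (rule tt)
    show "Suc k \<le> j'" using Suc.prems(8) j by simp
  qed
  have "SWAP (\<sigma>, [(h, s1), (g, t1)]) = SWAP (\<sigma>, [(h, s2), (g, t2)])" using a1(1) a2(1) aa IH by simp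
  then have "s1 = s2" using swap_inj[OF st1(1,2) ns st2(1,2)] by blast
  moreover have "take (j - 1) P1 = take (j - 1) P2"
  proof -
    obtain j'' where "j' = Suc j''" using Suc.prems(8) j by (cases j') auto
    then show ?thesis using P1 P2 gg IH j by simp
  qed
  ultimately show ?case by blast
qed

end


context L begin

fun Phi :: "'a \<Rightarrow> ('a set \<times> 'a) list \<Rightarrow> ('a set \<times> 'a) list" where
  "Phi \<sigma> [] = []"
| "Phi \<sigma> ((h, s) # ys) = bub (kpos h (map fst (Phi s ys))) \<sigma> ((h, s) # Phi s ys)"

lemma INV_Nil: "INV []"
  unfolding INV_def by (cases fh) auto

lemma kpos_gen:
  assumes "INV w" "h \<in> F"
  shows "kpos h w \<le> length w \<and> (\<forall>g\<in>set (take (kpos h w) w). \<not> dep g h) \<and> INV (ins_at (kpos h w) h w)"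
proof (cases fh)
  case None then show ?thesis using kpos_None[OF None assms] by blast
next
  case (Some f) then show ?thesis using kpos_Some[OF Some assms] by blast
qed

lemma Phi_props:
  assumes "walk_from \<Omega> F \<rho> \<sigma> xs"
  shows "walk_from \<Omega> F \<rho> \<sigma> (Phi \<sigma> xs) \<and> length (Phi \<sigma> xs) = length xs \<and>
    set (map fst (Phi \<sigma> xs)) = set (map fst xs) \<and> INV (map fst (Phi \<sigma> xs)) \<and>
    (\<forall>\<sigma>0 pre. \<sigma>0 \<in> \<Omega> \<longrightarrow> walk_from \<Omega> F \<rho> \<sigma>0 pre \<longrightarrow> last (\<sigma>0 # map snd pre) = \<sigma> \<longrightarrow>
       VS\<^sup>*\<^sup>* (\<sigma>0, pre @ xs) (\<sigma>0, pre @ Phi \<sigma> xs))"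
  using assms
proof (induction xs arbitrary: \<sigma>)
  case Nil then show ?case using INV_Nil by simp
next
  case (Cons p ys)
  obtain h s where p: "p = (h, s)" by (cases p)
  have st: "step \<Omega> F \<rho> \<sigma> h s" and wy: "walk_from \<Omega> F \<rho> s ys" using Cons.prems p by auto
  have hF: "h \<in> F" using step_F[OF st] .
  note IH = Cons.IH[OF wy]
  define P where "P = Phi s ys"
  define k where "k = kpos h (map fst P)"
  have K: "k \<le> length (map fst P)" "\<forall>g\<in>set (take k (map fst P)). \<not> dep g h" "INV (ins_at k h (map fst P))"
    using kpos_gen[OF _ hF, of "map fst P"] IH unfolding k_def P_def by auto
  have wP: "walk_from \<Omega> F \<rho> \<sigma> ((h, s) # P)" using st IH P_def by simp
  have K1: "k \<le> length P" using K(1) by simp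
  note B = bub_props[OF wP K1 K(2)]
  have ph: "Phi \<sigma> (p # ys) = bub k \<sigma> ((h, s) # P)" using p k_def P_def by simp
  have m: "map fst (bub k \<sigma> ((h, s) # P)) = ins_at k h (map fst P)" using B by (simp add: ins_at_def take_map drop_map)
  have ms: "set (map fst (bub k \<sigma> ((h, s) # P))) = set (map fst (p # ys))"
  proof -
    have "set (ins_at k h (map fst P)) = set (h # map fst P)"
      unfolding ins_at_def by (metis append_take_drop_id set_append list.set(2) Un_insert_right)
    then show ?thesis using m IH P_def p by simp
  qed
  have ch: "\<forall>\<sigma>0 pre. \<sigma>0 \<in> \<Omega> \<longrightarrow> walk_from \<Omega> F \<rho> \<sigma>0 pre \<longrightarrow> last (\<sigma>0 # map snd pre) = \<sigma> \<longrightarrow>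
       VS\<^sup>*\<^sup>* (\<sigma>0, pre @ p # ys) (\<sigma>0, pre @ bub k \<sigma> ((h, s) # P))"
  proof (intro allI impI)
    fix \<sigma>0 pre assume o: "\<sigma>0 \<in> \<Omega>" and wp: "walk_from \<Omega> F \<rho> \<sigma>0 pre" and l: "last (\<sigma>0 # map snd pre) = \<sigma>"
    have wp2: "walk_from \<Omega> F \<rho> \<sigma>0 (pre @ [(h, s)])" using wp l st by (simp add: walk_from_append)
    have c: "\<forall>\<sigma>0 pre. \<sigma>0 \<in> \<Omega> \<longrightarrow> walk_from \<Omega> F \<rho> \<sigma>0 pre \<longrightarrow> last (\<sigma>0 # map snd pre) = s \<longrightarrow>
       VS\<^sup>*\<^sup>* (\<sigma>0, pre @ ys) (\<sigma>0, pre @ Phi s ys)" using IH by blast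
    have l2: "last (\<sigma>0 # map snd (pre @ [(h, s)])) = s" by simp
    have "VS\<^sup>*\<^sup>* (\<sigma>0, (pre @ [(h, s)]) @ ys) (\<sigma>0, (pre @ [(h, s)]) @ P)"
      using c[rule_format, OF o wp2 l2] P_def by simp
    then have 1: "VS\<^sup>*\<^sup>* (\<sigma>0, pre @ p # ys) (\<sigma>0, pre @ (h, s) # P)" using p by simp
    have 2: "VS\<^sup>*\<^sup>* (\<sigma>0, pre @ (h, s) # P) (\<sigma>0, pre @ bub k \<sigma> ((h, s) # P))" using B o wp l by blast
    show "VS\<^sup>*\<^sup>* (\<sigma>0, pre @ p # ys) (\<sigma>0, pre @ bub k \<sigma> ((h, s) # P))" using 1 2 by simp
  qed
  show ?case unfolding ph using B m ms ch IH P_def K(3) by simp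
qed

lemma Phi_id: assumes fs: "fh = Some f" shows "f \<notin> set (map fst xs) \<Longrightarrow> Phi \<sigma> xs = xs"
proof (induction xs arbitrary: \<sigma>)
  case (Cons p ys)
  obtain h s where p: "p = (h, s)" by (cases p)
  have "Phi s ys = ys" using Cons p by simp
  moreover have "f \<notin> set (map fst ys)" using Cons.prems by simp
  ultimately have "kpos h (map fst (Phi s ys)) = 0" using kpos_S[OF fs] by simp
  then show ?case using p \<open>Phi s ys = ys\<close> by simp
qed (simp only: Phi.simps)

end


context L begin

definition Qc :: "('a set \<times> 'a) list \<Rightarrow> ('a set \<times> 'a) list \<Rightarrow> bool" where
  "Qc A B \<longleftrightarrow> (\<forall>j. take j A = take j B \<longrightarrow> (j < length A \<longleftrightarrow> j < length B) \<and> (j < length A \<longrightarrow> fst (A ! j) = fst (B ! j)))"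

definition cont :: "('a set \<times> 'a) list \<Rightarrow> bool" where
  "cont xs \<longleftrightarrow> (\<forall>f. fh = Some f \<longrightarrow> f \<in> set (map fst xs))"

lemma Q_tail: "Qc ((h, s) # ys1) ((h, s) # ys2) \<Longrightarrow> Qc ys1 ys2"
  unfolding Qc_def
proof (intro allI impI)
  fix j assume a: "\<forall>j. take j ((h, s) # ys1) = take j ((h, s) # ys2) \<longrightarrow>
         (j < length ((h, s) # ys1)) = (j < length ((h, s) # ys2)) \<and>
         (j < length ((h, s) # ys1) \<longrightarrow> fst (((h, s) # ys1) ! j) = fst (((h, s) # ys2) ! j))"
    and t: "take j ys1 = take j ys2"
  have "take (Suc j) ((h, s) # ys1) = take (Suc j) ((h, s) # ys2)" using t by simp
  then show "(j < length ys1) = (j < length ys2) \<and> (j < length ys1 \<longrightarrow> fst (ys1 ! j) = fst (ys2 ! j))"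
    using a[rule_format, of "Suc j"] by simp
qed

lemma ins_nth: "j \<le> k \<Longrightarrow> k \<le> length w \<Longrightarrow> ins_at k h w ! j = (take k w @ [h]) ! j"
  unfolding ins_at_def by (cases "j < k") (auto simp: nth_append)

lemma nth_bub: "drop (Suc k) A = drop k P \<Longrightarrow> Suc k \<le> j \<Longrightarrow> j < length A \<Longrightarrow> A ! j = P ! (j - 1)"
proof -
  assume d: "drop (Suc k) A = drop k P" and j: "Suc k \<le> j" "j < length A"
  have "A ! j = drop (Suc k) A ! (j - Suc k)" using j by (simp add: nth_drop)
  also have "\<dots> = drop k P ! (j - Suc k)" using d by simp
  also have "\<dots> = P ! (j - 1)"
  proof (cases "k \<le> length P")
    case True then show ?thesis using j by (simp add: nth_drop)
  next
    case False
    then have "drop k P = []" by simp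
    then have "length (drop (Suc k) A) = 0" using d by simp
    then show ?thesis using j by simp
  qed
  finally show ?thesis .
qed

lemma compat:
  "walk_from \<Omega> F \<rho> \<sigma> xs1 \<Longrightarrow> walk_from \<Omega> F \<rho> \<sigma> xs2 \<Longrightarrow> Qc xs1 xs2 \<Longrightarrow> cont xs1 \<Longrightarrow> cont xs2 \<Longrightarrow>
   wup (map fst (Phi \<sigma> xs1)) = wup (map fst (Phi \<sigma> xs2)) \<Longrightarrow>
   Qc (Phi \<sigma> xs1) (Phi \<sigma> xs2) \<and> (Phi \<sigma> xs1 = Phi \<sigma> xs2 \<longrightarrow> xs1 = xs2)"
proof (induction xs1 arbitrary: \<sigma> xs2)
  case Nil
  have fN: "fh = None" using Nil.prems(4) unfolding cont_def by (cases fh) auto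
  have "map fst (Phi \<sigma> xs2) = []" using Nil.prems(6) wup_None[OF fN] by simp
  then have "length xs2 = 0" using Phi_props[OF Nil.prems(2)] by (metis length_map list.size(3))
  then show ?case by (simp add: Qc_def)
next
  case (Cons x1 ys1)
  obtain h s1 where x1: "x1 = (h, s1)" by (cases x1)
  have q0: "(0 < length (x1 # ys1)) = (0 < length xs2) \<and> fst ((x1 # ys1) ! 0) = fst (xs2 ! 0)"
    using Cons.prems(3) unfolding Qc_def by (metis take_0 length_greater_0_conv list.distinct(1))
  then obtain s2 ys2 where xs2: "xs2 = (h, s2) # ys2" using x1
    by (cases xs2) auto
  have st1: "step \<Omega> F \<rho> \<sigma> h s1" "walk_from \<Omega> F \<rho> s1 ys1" using Cons.prems(1) x1 by auto
  have st2: "step \<Omega> F \<rho> \<sigma> h s2" "walk_from \<Omega> F \<rho> s2 ys2" using Cons.prems(2) xs2 by auto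
  have hF: "h \<in> F" using step_F[OF st1(1)] .
  define P1 where "P1 = Phi s1 ys1"
  define P2 where "P2 = Phi s2 ys2"
  define k1 where "k1 = kpos h (map fst P1)"
  define k2 where "k2 = kpos h (map fst P2)"
  note PP1 = Phi_props[OF st1(2), folded P1_def] and PP2 = Phi_props[OF st2(2), folded P2_def]
  note KK1 = kpos_gen[OF _ hF, of "map fst P1", folded k1_def] and KK2 = kpos_gen[OF _ hF, of "map fst P2", folded k2_def]
  have K1: "k1 \<le> length P1" "\<forall>g\<in>set (take k1 (map fst P1)). \<not> dep g h" using KK1 PP1 by auto
  have K2: "k2 \<le> length P2" "\<forall>g\<in>set (take k2 (map fst P2)). \<not> dep g h" using KK2 PP2 by auto
  have wP1: "walk_from \<Omega> F \<rho> \<sigma> ((h, s1) # P1)" using st1 PP1 by simp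
  have wP2: "walk_from \<Omega> F \<rho> \<sigma> ((h, s2) # P2)" using st2 PP2 by simp
  note B1 = bub_props[OF wP1 K1] and B2 = bub_props[OF wP2 K2]
  have ph1: "Phi \<sigma> (x1 # ys1) = bub k1 \<sigma> ((h, s1) # P1)" using x1 k1_def P1_def by simp
  have ph2: "Phi \<sigma> xs2 = bub k2 \<sigma> ((h, s2) # P2)" using xs2 k2_def P2_def by simp
  have m1: "map fst (Phi \<sigma> (x1 # ys1)) = ins_at k1 h (map fst P1)" using B1 ph1 by (simp add: ins_at_def)
  have m2: "map fst (Phi \<sigma> xs2) = ins_at k2 h (map fst P2)" using B2 ph2 by (simp add: ins_at_def)
  have sm1: "set (map fst (Phi \<sigma> (x1 # ys1))) = set (map fst (x1 # ys1))"
    using Phi_props[OF Cons.prems(1)] by blast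
  have sm2: "set (map fst (Phi \<sigma> xs2)) = set (map fst xs2)"
    using Phi_props[OF Cons.prems(2)] by blast
  have cases: "(\<exists>f. fh = Some f \<and> f \<notin> set (map fst P1) \<and> f \<notin> set (map fst P2) \<and> k1 = 0 \<and> k2 = 0) \<or>
     (k1 = k2 \<and> take k1 (map fst P1) = take k2 (map fst P2) \<and> wup (map fst P1) = wup (map fst P2) \<and>
      cont ys1 \<and> cont ys2)"
  proof (cases fh)
    case None
    have "ins_at k1 h (map fst P1) = ins_at k2 h (map fst P2)"
      using Cons.prems(6) m1 m2 wup_None[OF None] by simp
    moreover have I1: "INV (map fst P1)" and I2: "INV (map fst P2)" using PP1 PP2 by blast+
    ultimately have d: "k1 = k2 \<and> take k1 (map fst P1) = take k2 (map fst P2) \<and> map fst P1 = map fst P2"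
      using det_N[OF None I1 I2 hF, folded k1_def k2_def] by blast
    have "cont ys1" "cont ys2" unfolding cont_def using None by auto
    then show ?thesis using d by simp
  next
    case (Some f)
    have f1': "f \<in> set (map fst (x1 # ys1))" using Cons.prems(4) unfolding cont_def using Some by simp
    have f1: "f \<in> set (ins_at k1 h (map fst P1))" using f1' sm1 m1 by metis
    have f2': "f \<in> set (map fst xs2)" using Cons.prems(5) unfolding cont_def using Some by simp
    have f2: "f \<in> set (ins_at k2 h (map fst P2))" using f2' sm2 m2 by metis
    have I1: "INV (map fst P1)" and I2: "INV (map fst P2)" using PP1 PP2 by blast+
    have e: "wup (ins_at k1 h (map fst P1)) = wup (ins_at k2 h (map fst P2))" using Cons.prems(6) m1 m2 by simp
    have d: "(f \<notin> set (map fst P1) \<and> f \<notin> set (map fst P2) \<and> k1 = 0 \<and> k2 = 0) \<or>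
      (k1 = k2 \<and> take k1 (map fst P1) = take k2 (map fst P2) \<and> wup (map fst P1) = wup (map fst P2) \<and>
       f \<in> set (map fst P1) \<and> f \<in> set (map fst P2))"
      using det_S[OF Some I1 I2 hF, folded k1_def k2_def, OF e f1 f2] by blast
    have "f \<in> set (map fst P1) \<Longrightarrow> cont ys1" unfolding cont_def using Some PP1 by auto
    moreover have "f \<in> set (map fst P2) \<Longrightarrow> cont ys2" unfolding cont_def using Some PP2 by auto
    ultimately show ?thesis using d by (metis Some)
  qed
  show ?case
  proof (cases "\<exists>f. fh = Some f \<and> f \<notin> set (map fst P1) \<and> f \<notin> set (map fst P2) \<and> k1 = 0 \<and> k2 = 0")
    case True
    then obtain f where f: "fh = Some f" "f \<notin> set (map fst P1)" "f \<notin> set (map fst P2)" "k1 = 0" "k2 = 0" by blast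
    have "f \<notin> set (map fst ys1)" using f(2) PP1 by simp
    then have i1: "P1 = ys1" unfolding P1_def using Phi_id[OF f(1)] by blast
    have "f \<notin> set (map fst ys2)" using f(3) PP2 by simp
    then have i2: "P2 = ys2" unfolding P2_def using Phi_id[OF f(1)] by blast
    have "Phi \<sigma> (x1 # ys1) = x1 # ys1" using ph1 f(4) i1 x1 by simp
    moreover have "Phi \<sigma> xs2 = xs2" using ph2 f(5) i2 xs2 by simp
    ultimately show ?thesis using Cons.prems(3) by simp
  next
    case False
    then have c: "k1 = k2" "take k1 (map fst P1) = take k2 (map fst P2)" "wup (map fst P1) = wup (map fst P2)"
      "cont ys1" "cont ys2" using cases by auto
    have lp1: "length P1 = length ys1" using PP1 by blast
    have lp2: "length P2 = length ys2" using PP2 by blast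
    define k where "k = k1"
    have k2k: "k2 = k" using c(1) k_def by simp
    define A where "A = bub k \<sigma> ((h, s1) # P1)"
    define B where "B = bub k \<sigma> ((h, s2) # P2)"
    have phA: "Phi \<sigma> (x1 # ys1) = A" using ph1 A_def k_def by simp
    have phB: "Phi \<sigma> xs2 = B" using ph2 B_def k2k by simp
    have lA: "length A = Suc (length ys1)" using B1 lp1 A_def k_def by simp
    have lB: "length B = Suc (length ys2)" using B2 lp2 B_def k2k by simp
    have mA: "map fst A = ins_at k h (map fst P1)" using m1 phA k_def by simp
    have mB: "map fst B = ins_at k h (map fst P2)" using m2 phB k2k by simp
    have dA: "drop (Suc k) A = drop k P1" using B1 A_def k_def by simp
    have dB: "drop (Suc k) B = drop k P2" using B2 B_def k2k by simp
    have tk: "take k (map fst P1) = take k (map fst P2)" using c(2) k_def k2k by simp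
    have kP1: "k \<le> length P1" using K1 k_def by simp
    have kP2: "k \<le> length P2" using K2 k2k by simp
    have nd: "\<forall>g\<in>set (take k (map fst P1)). \<not> dep g h" using K1 k_def by simp
    have pre: "s1 = s2 \<and> take (j - 1) P1 = take (j - 1) P2" if "take j A = take j B" "Suc k \<le> j" for j
      using bub_prefix[OF wP1 wP2 kP1 kP2 tk nd, of j] that A_def B_def by blast
    have IH: "Qc P1 P2 \<and> (P1 = P2 \<longrightarrow> ys1 = ys2)" if "s1 = s2"
    proof -
      have "Qc ys1 ys2" using Q_tail Cons.prems(3) x1 xs2 that by blast
      moreover have "walk_from \<Omega> F \<rho> s1 ys2" using st2(2) that by simp
      moreover have "wup (map fst (Phi s1 ys1)) = wup (map fst (Phi s1 ys2))" using c(3) P1_def P2_def that by simp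
      ultimately show ?thesis using Cons.IH[OF st1(2) _ _ c(4) c(5)] P1_def P2_def that by simp
    qed
    have QAB: "Qc A B"
      unfolding Qc_def
    proof (intro allI impI)
      fix j assume tj: "take j A = take j B"
      show "(j < length A) = (j < length B) \<and> (j < length A \<longrightarrow> fst (A ! j) = fst (B ! j))"
      proof (cases "j \<le> k")
        case True
        have lk1: "k \<le> length (map fst P1)" "k \<le> length (map fst P2)" using kP1 kP2 by auto
        have jA: "j < length A" using True lA kP1 lp1 by linarith
        have jB: "j < length B" using True lB kP2 lp2 by linarith
        have fa: "fst (A ! j) = (map fst A) ! j" using jA by (simp only: nth_map)
        have fb: "fst (B ! j) = (map fst B) ! j" using jB by (simp only: nth_map)
        have ma: "(map fst A) ! j = (take k (map fst P1) @ [h]) ! j" using mA ins_nth[OF True lk1(1)] by (simp only:)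
        have mb: "(map fst B) ! j = (take k (map fst P2) @ [h]) ! j" using mB ins_nth[OF True lk1(2)] by (simp only:)
        have "fst (A ! j) = fst (B ! j)" using fa fb ma mb tk by (simp only:)
        then show ?thesis using jA jB by blast
      next
        case False
        then have jk: "Suc k \<le> j" by simp
        note p = pre[OF tj jk]
        have Q: "Qc P1 P2" using IH p by blast
        have tj': "take (j - 1) P1 = take (j - 1) P2" using p by blast
        have e1: "(j - 1 < length P1) = (j - 1 < length P2)" and
             e2: "j - 1 < length P1 \<longrightarrow> fst (P1 ! (j - 1)) = fst (P2 ! (j - 1))"
          using Q[unfolded Qc_def, rule_format, OF tj'] by blast+
        have LA: "length A = Suc (length P1)" using lA lp1 by simp
        have LB: "length B = Suc (length P2)" using lB lp2 by simp
        have "(j < length A) = (j < length B)" using e1 LA LB jk by linarith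
        moreover have "j < length A \<longrightarrow> fst (A ! j) = fst (B ! j)"
        proof
          assume jA: "j < length A"
          then have jB: "j < length B" using \<open>(j < length A) = (j < length B)\<close> by simp
          have "A ! j = P1 ! (j - 1)" using nth_bub[OF dA jk jA] .
          moreover have "B ! j = P2 ! (j - 1)" using nth_bub[OF dB jk jB] .
          moreover have "j - 1 < length P1" using jA LA jk by simp
          ultimately show "fst (A ! j) = fst (B ! j)" using e2 by simp
        qed
        ultimately show ?thesis by blast
      qed
    qed
    have EQ: "A = B \<longrightarrow> x1 # ys1 = xs2"
    proof
      assume AB: "A = B"
      have kA: "Suc k \<le> length A" using lA kP1 lp1 by simp
      have p: "s1 = s2 \<and> take (length A - 1) P1 = take (length A - 1) P2" using pre[OF _ kA] AB by simp
      have "length A - 1 = length P1" "length A - 1 = length P2" using lA lB AB lp1 lp2 by auto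
      then have "P1 = P2" using p by (metis take_all order_refl)
      then have "ys1 = ys2" using IH p by blast
      then show "x1 # ys1 = xs2" using x1 xs2 p by simp
    qed
    show ?thesis unfolding phA phB using QAB EQ by blast
  qed
qed

end


context L begin

lemma valid_of_Q:
  assumes W: "\<forall>\<tau>\<in>S. is_walk \<Omega> F \<rho> \<tau>"
    and Q: "\<forall>\<tau>1\<in>S. \<forall>\<tau>2\<in>S. fst \<tau>1 = fst \<tau>2 \<longrightarrow> Qc (snd \<tau>1) (snd \<tau>2)"
  shows "valid_set \<Omega> F \<rho> S"
proof -
  define P where "P = (\<lambda>r \<tau>. \<tau> \<in> S \<and> fst \<tau> = fst r \<and> length (snd r) < length (snd \<tau>) \<and> take (length (snd r)) (snd \<tau>) = snd r)"
  define str where "str = (\<lambda>r. if (\<exists>\<tau>. P r \<tau>) then fst (snd (SOME \<tau>. P r \<tau>) ! length (snd r))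
     else (SOME g. g \<in> flaws_at F (last_state r)))"
  have ds: "det_strategy \<Omega> F \<rho> str"
    unfolding det_strategy_def
  proof (intro allI impI)
    fix r assume r: "is_walk \<Omega> F \<rho> r \<and> flaws_at F (last_state r) \<noteq> {}"
    show "str r \<in> flaws_at F (last_state r)"
    proof (cases "\<exists>\<tau>. P r \<tau>")
      case True
      define \<tau> where "\<tau> = (SOME \<tau>. P r \<tau>)"
      have Pt: "P r \<tau>" using someI_ex[OF True] \<tau>_def by simp
      define n where "n = length (snd r)"
      define xs where "xs = snd \<tau>"
      have n: "n < length xs" "take n xs = snd r" "fst \<tau> = fst r" "\<tau> \<in> S" using Pt unfolding P_def n_def xs_def by auto
      have wt: "walk_from \<Omega> F \<rho> (fst \<tau>) xs" using W n(4) xs_def is_walk_def by blast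
      have "xs = take n xs @ xs ! n # drop (Suc n) xs" using n(1) by (simp add: id_take_nth_drop)
      then have "walk_from \<Omega> F \<rho> (last (fst \<tau> # map snd (take n xs))) (xs ! n # drop (Suc n) xs)"
        using wt walk_from_append by metis
      then have "step \<Omega> F \<rho> (last (fst \<tau> # map snd (take n xs))) (fst (xs ! n)) (snd (xs ! n))"
        by (cases "xs ! n") simp
      then have "fst (xs ! n) \<in> flaws_at F (last_state r)"
        unfolding step_def last_state_def using n by simp
      moreover have "str r = fst (xs ! n)" unfolding str_def using True \<tau>_def xs_def n_def by simp
      ultimately show ?thesis by simp
    next
      case False
      then have "str r = (SOME g. g \<in> flaws_at F (last_state r))" unfolding str_def by simp
      then show ?thesis using r by (simp add: some_in_eq)
    qed
  qed
  have fo: "\<forall>\<tau>\<in>S. follows str \<tau>"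
    unfolding follows_def
  proof (intro ballI allI impI)
    fix \<tau> i assume t: "\<tau> \<in> S" and i: "i < length (snd \<tau>)"
    define r where "r = (fst \<tau>, take i (snd \<tau>))"
    have lr: "length (snd r) = i" using i r_def by simp
    have ex: "\<exists>\<tau>'. P r \<tau>'" unfolding P_def using t i lr r_def by (intro exI[of _ \<tau>]) simp
    define \<tau>' where "\<tau>' = (SOME \<tau>. P r \<tau>)"
    have Pt: "P r \<tau>'" using someI_ex[OF ex] \<tau>'_def by simp
    then have t': "\<tau>' \<in> S" "fst \<tau>' = fst \<tau>" "i < length (snd \<tau>')" "take i (snd \<tau>') = take i (snd \<tau>)"
      unfolding P_def r_def using lr r_def by auto
    have "Qc (snd \<tau>') (snd \<tau>)" using Q t t' by blast
    then have "fst (snd \<tau>' ! i) = fst (snd \<tau> ! i)" using t'(3,4) unfolding Qc_def by blast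
    moreover have "str r = fst (snd \<tau>' ! i)" unfolding str_def using ex \<tau>'_def lr by simp
    ultimately show "fst (snd \<tau> ! i) = str (fst \<tau>, take i (snd \<tau>))" using r_def by simp
  qed
  have np: "\<forall>\<tau>\<in>S. \<forall>\<tau>'\<in>S. \<not> proper_prefix \<tau> \<tau>'"
  proof (intro ballI notI)
    fix \<tau> \<tau>' assume t: "\<tau> \<in> S" "\<tau>' \<in> S" and pp: "proper_prefix \<tau> \<tau>'"
    obtain xs where x: "fst \<tau> = fst \<tau>'" "xs \<noteq> []" "snd \<tau>' = snd \<tau> @ xs" using pp proper_prefix_def by blast
    have "Qc (snd \<tau>) (snd \<tau>')" using Q t x(1) by blast
    moreover have "take (length (snd \<tau>)) (snd \<tau>) = take (length (snd \<tau>)) (snd \<tau>')" using x(3) by simp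
    ultimately have "(length (snd \<tau>) < length (snd \<tau>)) = (length (snd \<tau>) < length (snd \<tau>'))"
      unfolding Qc_def by blast
    then show False using x(2,3) by simp
  qed
  show ?thesis unfolding valid_set_def using W ds fo np by blast
qed

lemma ps_of: "sp Ws \<Longrightarrow> srt Ws \<Longrightarrow> concat Ws = V \<Longrightarrow> pi_stable F sim \<pi> V"
  unfolding pi_stable_def by (rule disjI2, rule exI[of _ Ws]) (auto simp: sp_stable srt_def)

lemma wup_prefix: "wup w = take (length (wup w)) w"
  unfolding wup_def by (cases fh) (auto simp: min_def)

end

theorem theorem5:
  fixes \<Omega> :: "'a set" and F :: "'a set set" and \<rho> :: "'a set \<Rightarrow> 'a \<Rightarrow> 'a \<Rightarrow> real"
    and sim :: "'a set \<Rightarrow> 'a set \<Rightarrow> bool" and SWAP :: "'a walk \<Rightarrow> 'a walk"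
    and \<pi> :: "'a set \<Rightarrow> nat" and fh :: "'a set option" and X :: "'a walk set"
  assumes "setting \<Omega> F \<rho> sim"
    and "swap_map \<Omega> F \<rho> sim SWAP"
    and "bij_betw \<pi> F {..<card F}"
    and "\<forall>f. fh = Some f \<longrightarrow> f \<in> F"
    and "valid_set \<Omega> F \<rho> X"
    and "\<forall>\<tau>\<in>X. contains fh \<tau>"
  shows "\<exists>X\<pi> \<Phi>. bij_betw \<Phi> X X\<pi> \<and> swapping_mapping \<Omega> F \<rho> sim SWAP X \<Phi> \<and>
     (\<forall>\<tau>\<in>X\<pi>. rev (W_upto fh \<tau>) \<in> Stab \<Omega> F \<rho> sim \<pi> \<and>
        (\<forall>f. fh = Some f \<longrightarrow> R_W F sim (rev (W_upto fh \<tau>)) = {f})) \<and>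
     (\<forall>W. valid_set \<Omega> F \<rho> {\<tau>\<in>X\<pi>. rev (W_upto fh \<tau>) = W})"
proof -
  interpret L \<Omega> F \<rho> sim SWAP \<pi> fh
    using assms(1-4) by unfold_locales (auto simp: bij_betw_def)
  define \<Phi> where "\<Phi> = (\<lambda>\<tau>::'a walk. (fst \<tau>, Phi (fst \<tau>) (snd \<tau>)))"
  have WX: "\<forall>\<tau>\<in>X. is_walk \<Omega> F \<rho> \<tau>" using assms(5) valid_set_def by blast
  obtain str where str: "\<forall>\<tau>\<in>X. follows str \<tau>" using assms(5) valid_set_def by blast
  have npX: "\<forall>\<tau>\<in>X. \<forall>\<tau>'\<in>X. \<not> proper_prefix \<tau> \<tau>'" using assms(5) valid_set_def by blast
  have wf: "walk_from \<Omega> F \<rho> (fst \<tau>) (snd \<tau>)" if "\<tau> \<in> X" for \<tau> using WX that is_walk_def by blast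
  have cX: "cont (snd \<tau>)" if "\<tau> \<in> X" for \<tau>
    using assms(6) that unfolding cont_def contains_def word_def by (auto split: option.split)
  have QX: "Qc (snd \<tau>1) (snd \<tau>2)" if t: "\<tau>1 \<in> X" "\<tau>2 \<in> X" "fst \<tau>1 = fst \<tau>2" for \<tau>1 \<tau>2
    unfolding Qc_def
  proof (intro allI impI)
    fix j assume tj: "take j (snd \<tau>1) = take j (snd \<tau>2)"
    have pp: False if "j < length (snd \<tau>a)" "\<not> j < length (snd \<tau>b)" "take j (snd \<tau>a) = take j (snd \<tau>b)"
      "\<tau>a \<in> X" "\<tau>b \<in> X" "fst \<tau>a = fst \<tau>b" for \<tau>a \<tau>b
    proof -
      have "take j (snd \<tau>b) = snd \<tau>b" using that(2) by simp
      then have "snd \<tau>a = snd \<tau>b @ drop j (snd \<tau>a)" using that(3) by (metis append_take_drop_id)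
      moreover have "drop j (snd \<tau>a) \<noteq> []" using that(1) by simp
      ultimately have "proper_prefix \<tau>b \<tau>a" unfolding proper_prefix_def using that(6)
        by (intro conjI exI[of _ "drop j (snd \<tau>a)"]) auto
      then show False using npX that(4,5) by blast
    qed
    have "(j < length (snd \<tau>1)) = (j < length (snd \<tau>2))" using pp[of \<tau>1 \<tau>2] pp[of \<tau>2 \<tau>1] tj t by auto
    moreover have "j < length (snd \<tau>1) \<longrightarrow> fst (snd \<tau>1 ! j) = fst (snd \<tau>2 ! j)"
    proof
      assume j1: "j < length (snd \<tau>1)"
      then have j2: "j < length (snd \<tau>2)" using \<open>(j < length (snd \<tau>1)) = (j < length (snd \<tau>2))\<close> by simp
      have "fst (snd \<tau>1 ! j) = str (fst \<tau>1, take j (snd \<tau>1))" using str t(1) j1 follows_def by blast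
      moreover have "fst (snd \<tau>2 ! j) = str (fst \<tau>2, take j (snd \<tau>2))" using str t(2) j2 follows_def by blast
      ultimately show "fst (snd \<tau>1 ! j) = fst (snd \<tau>2 ! j)" using tj t(3) by simp
    qed
    ultimately show "(j < length (snd \<tau>1)) = (j < length (snd \<tau>2)) \<and> (j < length (snd \<tau>1) \<longrightarrow> fst (snd \<tau>1 ! j) = fst (snd \<tau>2 ! j))"
      by blast
  qed
  have comp: "Qc (snd (\<Phi> \<tau>1)) (snd (\<Phi> \<tau>2)) \<and> (\<Phi> \<tau>1 = \<Phi> \<tau>2 \<longrightarrow> \<tau>1 = \<tau>2)"
    if t: "\<tau>1 \<in> X" "\<tau>2 \<in> X" "fst \<tau>1 = fst \<tau>2" "wup (word (\<Phi> \<tau>1)) = wup (word (\<Phi> \<tau>2))" for \<tau>1 \<tau>2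
  proof -
    have w2: "walk_from \<Omega> F \<rho> (fst \<tau>1) (snd \<tau>2)" using wf[OF t(2)] t(3) by simp
    have e: "wup (map fst (Phi (fst \<tau>1) (snd \<tau>1))) = wup (map fst (Phi (fst \<tau>1) (snd \<tau>2)))"
      using t(4) t(3) unfolding \<Phi>_def word_def by simp
    note c = compat[OF wf[OF t(1)] w2 QX[OF t(1-3)] cX[OF t(1)] cX[OF t(2)] e]
    show ?thesis unfolding \<Phi>_def using c t(3) by (auto simp: prod_eq_iff)
  qed
  have bij: "bij_betw \<Phi> X (\<Phi> ` X)"
    unfolding bij_betw_def
  proof
    show "inj_on \<Phi> X"
    proof (rule inj_onI)
      fix \<tau>1 \<tau>2 assume t: "\<tau>1 \<in> X" "\<tau>2 \<in> X" "\<Phi> \<tau>1 = \<Phi> \<tau>2"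
      have "fst \<tau>1 = fst \<tau>2" using t(3) unfolding \<Phi>_def by simp
      then show "\<tau>1 = \<tau>2" using comp[OF t(1,2)] t(3) by simp
    qed
  qed simp
  have sm: "swapping_mapping \<Omega> F \<rho> sim SWAP X \<Phi>"
    unfolding swapping_mapping_def
  proof
    fix \<tau> assume t: "\<tau> \<in> X"
    have o: "fst \<tau> \<in> \<Omega>" using WX t is_walk_def by blast
    have c: "\<forall>\<sigma>0 pre. \<sigma>0 \<in> \<Omega> \<longrightarrow> walk_from \<Omega> F \<rho> \<sigma>0 pre \<longrightarrow> last (\<sigma>0 # map snd pre) = fst \<tau> \<longrightarrow>
       VS\<^sup>*\<^sup>* (\<sigma>0, pre @ snd \<tau>) (\<sigma>0, pre @ Phi (fst \<tau>) (snd \<tau>))" using Phi_props[OF wf[OF t]] by blast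
    have "VS\<^sup>*\<^sup>* (fst \<tau>, [] @ snd \<tau>) (fst \<tau>, [] @ Phi (fst \<tau>) (snd \<tau>))"
      by (rule c[rule_format, OF o]) simp_all
    then show "VS\<^sup>*\<^sup>* \<tau> (\<Phi> \<tau>)" unfolding \<Phi>_def by simp
  qed
  have pa: "rev (W_upto fh \<tau>') \<in> Stab \<Omega> F \<rho> sim \<pi> \<and> (\<forall>f. fh = Some f \<longrightarrow> R_W F sim (rev (W_upto fh \<tau>')) = {f})"
    if tin: "\<tau>' \<in> \<Phi> ` X" for \<tau>'
  proof -
    obtain \<tau> where t: "\<tau> \<in> X" "\<tau>' = \<Phi> \<tau>" using tin by blast
    define \<sigma> where "\<sigma> = fst \<tau>"
    define P where "P = Phi \<sigma> (snd \<tau>)"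
    define u where "u = wup (map fst P)"
    have o: "\<sigma> \<in> \<Omega>" using WX t(1) is_walk_def \<sigma>_def by blast
    note PP = Phi_props[OF wf[OF t(1)], folded \<sigma>_def, folded P_def]
    have Wu: "W_upto fh \<tau>' = u" unfolding W_upto_eq t(2) \<Phi>_def word_def u_def P_def \<sigma>_def by simp
    have inv: "INV (map fst P)" using PP by blast
    have wP: "walk_from \<Omega> F \<rho> \<sigma> P" using PP by blast
    have up: "u = take (length u) (map fst P)" using wup_prefix u_def by metis
    have walk: "is_walk \<Omega> F \<rho> (\<sigma>, take (length u) P)"
      using walk_from_append[of \<sigma> "take (length u) P" "drop (length u) P"] wP o unfolding is_walk_def by simp
    have wd: "word (\<sigma>, take (length u) P) = rev (rev u)" unfolding word_def using up by (simp add: take_map)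
    have ps_R: "pi_stable F sim \<pi> (rev u) \<and> (\<forall>f. fh = Some f \<longrightarrow> R_W F sim (rev u) = {f})"
    proof (cases fh)
      case None
      have "u = map fst P" unfolding u_def using wup_None[OF None] by simp
      then have "u = [] \<or> (\<exists>Ws. sp Ws \<and> srt Ws \<and> concat Ws = rev u)" using inv INV_N[OF None] by simp
      then have "pi_stable F sim \<pi> (rev u)"
        using ps_of unfolding pi_stable_def by auto
      then show ?thesis using None by simp
    next
      case (Some f)
      have "f \<in> set (map fst (snd \<tau>))" using cX[OF t(1)] Some unfolding cont_def by simp
      then have "f \<in> set (map fst P)" using PP by simp
      then obtain Ws where Ws: "sp Ws" "srt Ws" "concat Ws = rev u" "hd Ws = [f]"
        using inv unfolding INV_S[OF Some] u_def by blast
      have "pi_stable F sim \<pi> (rev u)" using ps_of[OF Ws(1-3)] .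
      moreover have "R_W F sim (rev u) = {f}"
      proof -
        have ne: "rev u \<noteq> []" using sp_concat_ne[OF Ws(1)] Ws(3) by simp
        have "(THE Ws. stable_partition F sim (rev u) Ws) = Ws" using PW_eq[OF Ws(1)] Ws(3) PW_def by simp
        then show ?thesis unfolding R_W_def using ne Ws(4) by simp
      qed
      ultimately show ?thesis using Some by simp
    qed
    have "rev u \<in> Stab \<Omega> F \<rho> sim \<pi>" unfolding Stab_def using ps_R walk wd by blast
    then show ?thesis unfolding Wu using ps_R by blast
  qed
  have pb: "valid_set \<Omega> F \<rho> {\<tau>\<in>\<Phi> ` X. rev (W_upto fh \<tau>) = W}" for W
  proof (rule valid_of_Q)
    show "\<forall>\<tau>\<in>{\<tau> \<in> \<Phi> ` X. rev (W_upto fh \<tau>) = W}. is_walk \<Omega> F \<rho> \<tau>"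
    proof
      fix \<tau>' assume "\<tau>' \<in> {\<tau> \<in> \<Phi> ` X. rev (W_upto fh \<tau>) = W}"
      then obtain \<tau> where t: "\<tau> \<in> X" "\<tau>' = \<Phi> \<tau>" by blast
      have "fst \<tau> \<in> \<Omega>" using WX t(1) is_walk_def by blast
      moreover have "walk_from \<Omega> F \<rho> (fst \<tau>) (Phi (fst \<tau>) (snd \<tau>))" using Phi_props[OF wf[OF t(1)]] by blast
      ultimately show "is_walk \<Omega> F \<rho> \<tau>'" unfolding t(2) \<Phi>_def is_walk_def by simp
    qed
  next
    show "\<forall>\<tau>1\<in>{\<tau> \<in> \<Phi> ` X. rev (W_upto fh \<tau>) = W}. \<forall>\<tau>2\<in>{\<tau> \<in> \<Phi> ` X. rev (W_upto fh \<tau>) = W}.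
        fst \<tau>1 = fst \<tau>2 \<longrightarrow> Qc (snd \<tau>1) (snd \<tau>2)"
    proof (intro ballI impI)
      fix \<tau>1' \<tau>2' assume a1: "\<tau>1' \<in> {\<tau> \<in> \<Phi> ` X. rev (W_upto fh \<tau>) = W}"
        and a2: "\<tau>2' \<in> {\<tau> \<in> \<Phi> ` X. rev (W_upto fh \<tau>) = W}" and f: "fst \<tau>1' = fst \<tau>2'"
      obtain \<tau>1 where t1: "\<tau>1 \<in> X" "\<tau>1' = \<Phi> \<tau>1" "rev (W_upto fh \<tau>1') = W" using a1 by blast
      obtain \<tau>2 where t2: "\<tau>2 \<in> X" "\<tau>2' = \<Phi> \<tau>2" "rev (W_upto fh \<tau>2') = W" using a2 by blast
      have ff: "fst \<tau>1 = fst \<tau>2" using f t1(2) t2(2) unfolding \<Phi>_def by simp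
      have "wup (word (\<Phi> \<tau>1)) = wup (word (\<Phi> \<tau>2))" using t1 t2 W_upto_eq by (metis rev_rev_ident)
      then show "Qc (snd \<tau>1') (snd \<tau>2')" using comp[OF t1(1) t2(1) ff] t1(2) t2(2) by simp
    qed
  qed
  show ?thesis using bij sm pa pb by blast
qed


end
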